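(* In the setting below, let $n,k\in\mathbb{Z}$ and $0<\alpha\le1$. Then $-n\lhd0\lhd k\lhd n$ over $I_\alpha$ if and only if $-n\lhd -k\lhd0\lhd n$ over $I_\alpha$. In particular, if $n$ is a closest return time with respect to $I_\alpha$, then so is $-n$.
   Context: $\mathbb{T}^1=\mathbb{R}/\mathbb{Z}$, $\omega\in[0,1)$ irrational, $T(\theta,x)=(\theta+\omega,T_\theta(x))$ a continuous map of $\mathbb{T}^2$, homotopic to the identity, with orientation-preserving homeomorphic fibre maps. Let $W=I\times K$ with $I,K\subset\mathbb{T}^1$ open intervals, $|I|<\tfrac12$, $I=(-|I|/2,|I|/2)$ centred at $0$, and $W$ wandering: $T^n(W)\cap W=\emptyset$ for all $n\in\mathbb{N}$. For $0<\alpha\le1$, $I_\alpha:=(-\alpha|I|/2,\alpha|I|/2)$. For $A\subseteq\mathbb{T}^2$, $A_\theta:=\{x:(\theta,x)\in A\}$. Integers $n_1,\dots,n_k$ are comparable over an interval $J$ if $J\subseteq\bigcap_{i=1}^k(I+n_i\omega)$. For $k\ge3$, "$n_1\lhd\dots\lhd n_k$ over $J$" means $n_1,\dots,n_k$ are comparable over $J$ and for all $\theta\in J$ and all $x_i\in(T^{n_i}W)_\theta$ the points $x_1,x_2,\dots,x_k$ lie in this cyclic (counterclockwise) order on the circle. $N(\alpha):=\{n\in\mathbb{Z}:n\text{ comparable over }I_\alpha\}=\{n:|n\omega\bmod1|\le\frac{1-\alpha}{2}|I|\}$. $n\in N(\alpha)$ is a closest return time (w.r.t. $I_\alpha$) if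 either ($-n\lhd0\lhd n$ over $I_\alpha$ and there is no $k\in N(\alpha)\setminus\{0\}$ with $|k|<|n|$ and $0\lhd k\lhd n$ over $I_\alpha$) or ($n\lhd0\lhd-n$ over $I_\alpha$ and there is no $k\in N(\alpha)\setminus\{0\}$ with $|k|<|n|$ and $n\lhd k\lhd0$ over $I_\alpha$). *)

theory Defs
  imports "HOL-Analysis.Analysis"
begin

(* Conventions: the circle T^1 = R/Z is represented by real lifts; a point of T^1 is any
   real number, two reals denoting the same point iff they differ by an integer.
   Subsets of T^1 / T^2 are represented by Z- resp. Z^2-periodic predicates on lifts.
   The skew product T(theta,x) = (theta+omega, T_theta(x)), homotopic to the identity with
   orientation-preserving homeomorphic fibre maps, is represented by a continuous lift
   F : R x R -> R with F (theta+1) x = F theta x, F theta (x+1) = F theta x + 1 and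
   F theta strictly increasing, i.e. T(theta,x) = (theta+omega, F theta x) mod Z^2. *)

definition mod1_eq :: "real \<Rightarrow> real \<Rightarrow> bool" where
  "mod1_eq x y \<longleftrightarrow> (\<exists>j::int. x = y + of_int j)"

text \<open>W = I x K with I = (-L/2, L/2) (so |I| = L) and K = (a, a+M) (so |K| = M), mod Z^2.\<close>
definition inW :: "real \<Rightarrow> real \<Rightarrow> real \<Rightarrow> real \<Rightarrow> real \<Rightarrow> bool" where
  "inW L a M \<theta> x \<longleftrightarrow>
     (\<exists>i::int. \<bar>\<theta> - of_int i\<bar> < L / 2) \<and> (\<exists>j::int. a < x - of_int j \<and> x - of_int j < a + M)"

text \<open>Fibre component of the lift of T^n: T^n(theta,x) = (theta + n omega, iter_lift F omega n theta x).\<close>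
fun iter_lift :: "(real \<Rightarrow> real \<Rightarrow> real) \<Rightarrow> real \<Rightarrow> nat \<Rightarrow> real \<Rightarrow> real \<Rightarrow> real" where
  "iter_lift F \<omega> 0 \<theta> x = x"
| "iter_lift F \<omega> (Suc n) \<theta> x = F (\<theta> + real n * \<omega>) (iter_lift F \<omega> n \<theta> x)"

text \<open>(theta,x) in T^m(W), for m an integer (negative m: preimage under T^|m|).\<close>
definition inTW :: "(real \<Rightarrow> real \<Rightarrow> real) \<Rightarrow> real \<Rightarrow> real \<Rightarrow> real \<Rightarrow> real \<Rightarrow> int \<Rightarrow> real \<Rightarrow> real \<Rightarrow> bool" where
  "inTW F \<omega> L a M m \<theta> x \<longleftrightarrow>
     (if 0 \<le> m then
        (\<exists>\<theta>0 x0. inW L a M \<theta>0 x0 \<and> mod1_eq (\<theta>0 + of_int m * \<omega>) \<theta>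
                 \<and> mod1_eq (iter_lift F \<omega> (nat m) \<theta>0 x0) x)
      else inW L a M (\<theta> + real (nat (-m)) * \<omega>) (iter_lift F \<omega> (nat (-m)) \<theta> x))"

definition Ialpha :: "real \<Rightarrow> real \<Rightarrow> real set" where
  "Ialpha L \<alpha> = {- \<alpha> * L / 2 <..< \<alpha> * L / 2}"

text \<open>n_1,...,n_k comparable over J: J is contained in every I + n_i omega.\<close>
definition comparable :: "real \<Rightarrow> real \<Rightarrow> int list \<Rightarrow> real set \<Rightarrow> bool" where
  "comparable \<omega> L ns J \<longleftrightarrow>
     (\<forall>\<theta>\<in>J. \<forall>n\<in>set ns. \<exists>i::int. \<bar>\<theta> - of_int n * \<omega> - of_int i\<bar> < L / 2)"

definition cyc_order :: "real list \<Rightarrow> bool" where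
  "cyc_order xs \<longleftrightarrow>
     (\<exists>ys. length ys = length xs \<and> (\<forall>i<length xs. mod1_eq (ys ! i) (xs ! i))
        \<and> sorted_wrt (<) ys \<and> (ys \<noteq> [] \<longrightarrow> last ys < hd ys + 1))"

definition lhd :: "(real \<Rightarrow> real \<Rightarrow> real) \<Rightarrow> real \<Rightarrow> real \<Rightarrow> real \<Rightarrow> real \<Rightarrow> int list \<Rightarrow> real set \<Rightarrow> bool" where
  "lhd F \<omega> L a M ns J \<longleftrightarrow>
     3 \<le> length ns \<and> comparable \<omega> L ns J \<and>
     (\<forall>\<theta>\<in>J. \<forall>xs. length xs = length ns \<and> (\<forall>i<length ns. inTW F \<omega> L a M (ns ! i) \<theta> (xs ! i))
        \<longrightarrow> cyc_order xs)"

definition Nset :: "real \<Rightarrow> real \<Rightarrow> real \<Rightarrow> int set" where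
  "Nset \<omega> L \<alpha> = {n. comparable \<omega> L [n] (Ialpha L \<alpha>)}"

definition closest_return :: "(real \<Rightarrow> real \<Rightarrow> real) \<Rightarrow> real \<Rightarrow> real \<Rightarrow> real \<Rightarrow> real \<Rightarrow> real \<Rightarrow> int \<Rightarrow> bool" where
  "closest_return F \<omega> L a M \<alpha> n \<longleftrightarrow> n \<in> Nset \<omega> L \<alpha> \<and>
     ((lhd F \<omega> L a M [-n, 0, n] (Ialpha L \<alpha>) \<and>
        \<not> (\<exists>k \<in> Nset \<omega> L \<alpha> - {0}. \<bar>k\<bar> < \<bar>n\<bar> \<and> lhd F \<omega> L a M [0, k, n] (Ialpha L \<alpha>)))
      \<or> (lhd F \<omega> L a M [n, 0, -n] (Ialpha L \<alpha>) \<and>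
        \<not> (\<exists>k \<in> Nset \<omega> L \<alpha> - {0}. \<bar>k\<bar> < \<bar>n\<bar> \<and> lhd F \<omega> L a M [n, k, 0] (Ialpha L \<alpha>))))"

end

theory Submission
  imports Defs
begin

lemma len3_cases: "length xs = 3 \<Longrightarrow> \<exists>a b c. xs = [a,b,c]"
  by (auto simp: numeral_eq_Suc length_Suc_conv)
lemma len4_cases: "length xs = 4 \<Longrightarrow> \<exists>a b c d. xs = [a,b,c,d]"
  by (auto simp: numeral_eq_Suc length_Suc_conv)
lemma all3: "(\<forall>i<(3::nat). P i) \<longleftrightarrow> P 0 \<and> P 1 \<and> P 2"
  by (auto simp: eval_nat_numeral less_Suc_eq)
lemma all4: "(\<forall>i<(4::nat). P i) \<longleftrightarrow> P 0 \<and> P 1 \<and> P 2 \<and> P 3"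
  by (auto simp: numeral_eq_Suc less_Suc_eq)
lemma cyc3_iff: "cyc_order [x1,x2,x3] \<longleftrightarrow> (\<exists>y1 y2 y3. mod1_eq y1 x1 \<and> mod1_eq y2 x2 \<and> mod1_eq y3 x3 \<and> y1 < y2 \<and> y2 < y3 \<and> y3 < y1 + 1)"
proof
  assume "cyc_order [x1,x2,x3]"
  then obtain ys where ys0: "length ys = length [x1,x2,x3]" "\<forall>i<length [x1,x2,x3]. mod1_eq (ys ! i) ([x1,x2,x3] ! i)"
     "sorted_wrt (<) ys" "ys \<noteq> [] \<longrightarrow> last ys < hd ys + 1"
    unfolding cyc_order_def by (elim exE conjE) (rule that)
  then obtain y1 y2 y3 where yy: "ys = [y1,y2,y3]" using len3_cases using len3_cases[of ys] ys0(1) by auto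
  have "\<forall>i<3. mod1_eq (ys ! i) ([x1,x2,x3] ! i)" using ys0(2) by simp
  then have "mod1_eq y1 x1 \<and> mod1_eq y2 x2 \<and> mod1_eq y3 x3" unfolding all3 yy by simp
  moreover have "y1 < y2 \<and> y2 < y3 \<and> y3 < y1 + 1" using ys0(3,4) unfolding yy by auto
  ultimately show "\<exists>y1 y2 y3. mod1_eq y1 x1 \<and> mod1_eq y2 x2 \<and> mod1_eq y3 x3 \<and> y1 < y2 \<and> y2 < y3 \<and> y3 < y1 + 1"
    by blast
next
  assume "\<exists>y1 y2 y3. mod1_eq y1 x1 \<and> mod1_eq y2 x2 \<and> mod1_eq y3 x3 \<and> y1 < y2 \<and> y2 < y3 \<and> y3 < y1 + 1"
  then obtain y1 y2 y3 where h: "mod1_eq y1 x1" "mod1_eq y2 x2" "mod1_eq y3 x3" "y1 < y2" "y2 < y3" "y3 < y1 + 1" by blast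
  have "\<forall>i<3. mod1_eq ([y1,y2,y3] ! i) ([x1,x2,x3] ! i)" unfolding all3 using h by simp
  moreover have "sorted_wrt (<) [y1,y2,y3]" using h by simp
  ultimately show "cyc_order [x1,x2,x3]" unfolding cyc_order_def using h(6)
    by (intro exI[of _ "[y1,y2,y3]"]) simp
qed

lemma cyc4_iff: "cyc_order [x1,x2,x3,x4] \<longleftrightarrow> (\<exists>y1 y2 y3 y4. mod1_eq y1 x1 \<and> mod1_eq y2 x2 \<and> mod1_eq y3 x3 \<and> mod1_eq y4 x4 \<and> y1 < y2 \<and> y2 < y3 \<and> y3 < y4 \<and> y4 < y1 + 1)"
proof
  assume "cyc_order [x1,x2,x3,x4]"
  then obtain ys where ys0: "length ys = length [x1,x2,x3,x4]" "\<forall>i<length [x1,x2,x3,x4]. mod1_eq (ys ! i) ([x1,x2,x3,x4] ! i)"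
     "sorted_wrt (<) ys" "ys \<noteq> [] \<longrightarrow> last ys < hd ys + 1"
    unfolding cyc_order_def by (elim exE conjE) (rule that)
  have "length ys = 4" using ys0(1) by simp
  then obtain y1 y2 y3 y4 where yy: "ys = [y1,y2,y3,y4]" using len4_cases by blast
  have "\<forall>i<4. mod1_eq (ys ! i) ([x1,x2,x3,x4] ! i)" using ys0(2) by simp
  then have "mod1_eq y1 x1 \<and> mod1_eq y2 x2 \<and> mod1_eq y3 x3 \<and> mod1_eq y4 x4" unfolding all4 yy by simp
  moreover have "y1 < y2 \<and> y2 < y3 \<and> y3 < y4 \<and> y4 < y1 + 1" using ys0(3,4) unfolding yy by auto
  ultimately show "\<exists>y1 y2 y3 y4. mod1_eq y1 x1 \<and> mod1_eq y2 x2 \<and> mod1_eq y3 x3 \<and> mod1_eq y4 x4 \<and> y1 < y2 \<and> y2 < y3 \<and> y3 < y4 \<and> y4 < y1 + 1"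
    by blast
next
  assume "\<exists>y1 y2 y3 y4. mod1_eq y1 x1 \<and> mod1_eq y2 x2 \<and> mod1_eq y3 x3 \<and> mod1_eq y4 x4 \<and> y1 < y2 \<and> y2 < y3 \<and> y3 < y4 \<and> y4 < y1 + 1"
  then obtain y1 y2 y3 y4 where h: "mod1_eq y1 x1" "mod1_eq y2 x2" "mod1_eq y3 x3" "mod1_eq y4 x4" "y1 < y2" "y2 < y3" "y3 < y4" "y4 < y1 + 1" by blast
  have "\<forall>i<4. mod1_eq ([y1,y2,y3,y4] ! i) ([x1,x2,x3,x4] ! i)" unfolding all4 using h by simp
  moreover have "sorted_wrt (<) [y1,y2,y3,y4]" using h by simp
  ultimately show "cyc_order [x1,x2,x3,x4]" unfolding cyc_order_def using h(8)
    by (intro exI[of _ "[y1,y2,y3,y4]"]) simp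
qed

definition nonint :: "real \<Rightarrow> bool" where "nonint x \<longleftrightarrow> (\<forall>j::int. x \<noteq> of_int j)"

lemma nonint_floor_less: "nonint x \<Longrightarrow> of_int \<lfloor>x\<rfloor> < x"
  unfolding nonint_def by (metis of_int_floor_le order_le_less)

lemma mod1_eq_shift: "mod1_eq y (x + of_int j) \<longleftrightarrow> mod1_eq y x"
  unfolding mod1_eq_def
proof
  assume "\<exists>k::int. y = x + of_int j + of_int k"
  then obtain k::int where "y = x + of_int j + of_int k" by blast
  then show "\<exists>k::int. y = x + of_int k" by (intro exI[of _ "j + k"]) simp
next
  assume "\<exists>k::int. y = x + of_int k"
  then obtain k::int where "y = x + of_int k" by blast
  then show "\<exists>k::int. y = x + of_int j + of_int k" by (intro exI[of _ "k - j"]) simp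
qed

lemma mod1_eq_plus1: "mod1_eq (y + 1) x \<longleftrightarrow> mod1_eq y x"
  unfolding mod1_eq_def
proof
  assume "\<exists>k::int. y + 1 = x + of_int k"
  then obtain k::int where "y + 1 = x + of_int k" by blast
  then show "\<exists>k::int. y = x + of_int k" by (intro exI[of _ "k - 1"]) simp
next
  assume "\<exists>k::int. y = x + of_int k"
  then obtain k::int where "y = x + of_int k" by blast
  then show "\<exists>k::int. y + 1 = x + of_int k" by (intro exI[of _ "k + 1"]) simp
qed

lemma mod1_eq_refl: "mod1_eq x x"
  unfolding mod1_eq_def by (intro exI[of _ 0]) simp

lemma mod1_eq_add_int: "mod1_eq (x + of_int k) x"
  unfolding mod1_eq_def by (intro exI[of _ k]) simp

lemma mod1_eq_minus1: "mod1_eq (y - 1) x \<longleftrightarrow> mod1_eq y x"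
  using mod1_eq_plus1[of "y - 1" x] by simp

lemma cyc3_floor:
  assumes n: "nonint (x2 - x1)" "nonint (x3 - x1)" "nonint (x3 - x2)"
  shows "cyc_order [x1,x2,x3] \<longleftrightarrow> \<lfloor>x3 - x1\<rfloor> - \<lfloor>x2 - x1\<rfloor> \<le> \<lfloor>x3 - x2\<rfloor>"
proof
  assume "cyc_order [x1,x2,x3]"
  then obtain y1 y2 y3 where h: "mod1_eq y1 x1" "mod1_eq y2 x2" "mod1_eq y3 x3" "y1 < y2" "y2 < y3" "y3 < y1 + 1"
    unfolding cyc3_iff by blast
  then obtain j1 j2 j3 :: int where j: "y1 = x1 + j1" "y2 = x2 + j2" "y3 = x3 + j3" unfolding mod1_eq_def by blast
  have "\<lfloor>x2 - x1\<rfloor> = j1 - j2" unfolding floor_eq_iff using h j by simp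
  moreover have "\<lfloor>x3 - x1\<rfloor> = j1 - j3" unfolding floor_eq_iff using h j by simp
  moreover have "j2 - j3 \<le> \<lfloor>x3 - x2\<rfloor>" unfolding le_floor_iff using h j by simp
  ultimately show "\<lfloor>x3 - x1\<rfloor> - \<lfloor>x2 - x1\<rfloor> \<le> \<lfloor>x3 - x2\<rfloor>" by simp
next
  assume a: "\<lfloor>x3 - x1\<rfloor> - \<lfloor>x2 - x1\<rfloor> \<le> \<lfloor>x3 - x2\<rfloor>"
  have f: "of_int \<lfloor>x2 - x1\<rfloor> < x2 - x1" "of_int \<lfloor>x3 - x1\<rfloor> < x3 - x1" "of_int \<lfloor>x3 - x2\<rfloor> < x3 - x2"
    using n nonint_floor_less by auto
  have g: "x2 - x1 < of_int \<lfloor>x2 - x1\<rfloor> + 1" "x3 - x1 < of_int \<lfloor>x3 - x1\<rfloor> + 1"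
    by linarith+
  have a': "real_of_int (\<lfloor>x3 - x1\<rfloor> - \<lfloor>x2 - x1\<rfloor>) \<le> of_int \<lfloor>x3 - x2\<rfloor>" using a by linarith
  show "cyc_order [x1,x2,x3]" unfolding cyc3_iff
  proof (intro exI conjI)
    show "mod1_eq x1 x1" by (rule mod1_eq_refl)
    show "mod1_eq (x2 + of_int (- \<lfloor>x2 - x1\<rfloor>)) x2" by (rule mod1_eq_add_int)
    show "mod1_eq (x3 + of_int (- \<lfloor>x3 - x1\<rfloor>)) x3" by (rule mod1_eq_add_int)
    show "x1 < x2 + of_int (- \<lfloor>x2 - x1\<rfloor>)" using f by simp
    show "x2 + of_int (- \<lfloor>x2 - x1\<rfloor>) < x3 + of_int (- \<lfloor>x3 - x1\<rfloor>)" using f a' by simp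
    show "x3 + of_int (- \<lfloor>x3 - x1\<rfloor>) < x1 + 1" using g by linarith
  qed
qed

lemma cyc4_floor:
  assumes n: "nonint (x2 - x1)" "nonint (x3 - x1)" "nonint (x4 - x1)" "nonint (x3 - x2)" "nonint (x4 - x3)"
  shows "cyc_order [x1,x2,x3,x4] \<longleftrightarrow> \<lfloor>x3 - x1\<rfloor> - \<lfloor>x2 - x1\<rfloor> \<le> \<lfloor>x3 - x2\<rfloor> \<and> \<lfloor>x4 - x1\<rfloor> - \<lfloor>x3 - x1\<rfloor> \<le> \<lfloor>x4 - x3\<rfloor>"
proof
  assume "cyc_order [x1,x2,x3,x4]"
  then obtain y1 y2 y3 y4 where h: "mod1_eq y1 x1" "mod1_eq y2 x2" "mod1_eq y3 x3" "mod1_eq y4 x4" "y1 < y2" "y2 < y3" "y3 < y4" "y4 < y1 + 1"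
    unfolding cyc4_iff by blast
  then obtain j1 j2 j3 j4 :: int where j: "y1 = x1 + j1" "y2 = x2 + j2" "y3 = x3 + j3" "y4 = x4 + j4" unfolding mod1_eq_def by blast
  have "\<lfloor>x2 - x1\<rfloor> = j1 - j2" unfolding floor_eq_iff using h j by simp
  moreover have "\<lfloor>x3 - x1\<rfloor> = j1 - j3" unfolding floor_eq_iff using h j by simp
  moreover have "\<lfloor>x4 - x1\<rfloor> = j1 - j4" unfolding floor_eq_iff using h j by simp
  moreover have "j2 - j3 \<le> \<lfloor>x3 - x2\<rfloor>" unfolding le_floor_iff using h j by simp
  moreover have "j3 - j4 \<le> \<lfloor>x4 - x3\<rfloor>" unfolding le_floor_iff using h j by simp
  ultimately show "\<lfloor>x3 - x1\<rfloor> - \<lfloor>x2 - x1\<rfloor> \<le> \<lfloor>x3 - x2\<rfloor> \<and> \<lfloor>x4 - x1\<rfloor> - \<lfloor>x3 - x1\<rfloor> \<le> \<lfloor>x4 - x3\<rfloor>" by simp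
next
  assume a: "\<lfloor>x3 - x1\<rfloor> - \<lfloor>x2 - x1\<rfloor> \<le> \<lfloor>x3 - x2\<rfloor> \<and> \<lfloor>x4 - x1\<rfloor> - \<lfloor>x3 - x1\<rfloor> \<le> \<lfloor>x4 - x3\<rfloor>"
  have f: "of_int \<lfloor>x2 - x1\<rfloor> < x2 - x1" "of_int \<lfloor>x3 - x2\<rfloor> < x3 - x2" "of_int \<lfloor>x4 - x3\<rfloor> < x4 - x3"
    using n nonint_floor_less by auto
  have g: "x4 - x1 < of_int \<lfloor>x4 - x1\<rfloor> + 1"
    by linarith
  have a': "real_of_int (\<lfloor>x3 - x1\<rfloor> - \<lfloor>x2 - x1\<rfloor>) \<le> of_int \<lfloor>x3 - x2\<rfloor>"
     "real_of_int (\<lfloor>x4 - x1\<rfloor> - \<lfloor>x3 - x1\<rfloor>) \<le> of_int \<lfloor>x4 - x3\<rfloor>" using a by linarith+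
  show "cyc_order [x1,x2,x3,x4]" unfolding cyc4_iff
  proof (intro exI conjI)
    show "mod1_eq x1 x1" by (rule mod1_eq_refl)
    show "mod1_eq (x2 + of_int (- \<lfloor>x2 - x1\<rfloor>)) x2" by (rule mod1_eq_add_int)
    show "mod1_eq (x3 + of_int (- \<lfloor>x3 - x1\<rfloor>)) x3" by (rule mod1_eq_add_int)
    show "mod1_eq (x4 + of_int (- \<lfloor>x4 - x1\<rfloor>)) x4" by (rule mod1_eq_add_int)
    show "x1 < x2 + of_int (- \<lfloor>x2 - x1\<rfloor>)" using f by simp
    show "x2 + of_int (- \<lfloor>x2 - x1\<rfloor>) < x3 + of_int (- \<lfloor>x3 - x1\<rfloor>)" using f a' by simp
    show "x3 + of_int (- \<lfloor>x3 - x1\<rfloor>) < x4 + of_int (- \<lfloor>x4 - x1\<rfloor>)" using f a' by simp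
    show "x4 + of_int (- \<lfloor>x4 - x1\<rfloor>) < x1 + 1" using g by linarith
  qed
qed

lemma cyc4_rot: "cyc_order [x1,x2,x3,x4] \<longleftrightarrow> cyc_order [x2,x3,x4,x1]"
proof
  assume "cyc_order [x1,x2,x3,x4]"
  then obtain y1 y2 y3 y4 where h: "mod1_eq y1 x1" "mod1_eq y2 x2" "mod1_eq y3 x3" "mod1_eq y4 x4" "y1 < y2" "y2 < y3" "y3 < y4" "y4 < y1 + 1"
    unfolding cyc4_iff by blast
  show "cyc_order [x2,x3,x4,x1]" unfolding cyc4_iff
    by (rule exI[of _ y2], rule exI[of _ y3], rule exI[of _ y4], rule exI[of _ "y1 + 1"])
       (use h in \<open>auto simp: mod1_eq_plus1\<close>)
next
  assume "cyc_order [x2,x3,x4,x1]"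
  then obtain y1 y2 y3 y4 where h: "mod1_eq y1 x2" "mod1_eq y2 x3" "mod1_eq y3 x4" "mod1_eq y4 x1" "y1 < y2" "y2 < y3" "y3 < y4" "y4 < y1 + 1"
    unfolding cyc4_iff by blast
  show "cyc_order [x1,x2,x3,x4]" unfolding cyc4_iff
    by (rule exI[of _ "y4 - 1"], rule exI[of _ y1], rule exI[of _ y2], rule exI[of _ y3])
       (use h in \<open>auto simp: mod1_eq_minus1\<close>)
qed

lemma cyc3_rot: "cyc_order [x1,x2,x3] \<longleftrightarrow> cyc_order [x2,x3,x1]"
proof
  assume "cyc_order [x1,x2,x3]"
  then obtain y1 y2 y3 where h: "mod1_eq y1 x1" "mod1_eq y2 x2" "mod1_eq y3 x3" "y1 < y2" "y2 < y3" "y3 < y1 + 1"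
    unfolding cyc3_iff by blast
  show "cyc_order [x2,x3,x1]" unfolding cyc3_iff
    by (rule exI[of _ y2], rule exI[of _ y3], rule exI[of _ "y1 + 1"])
       (use h in \<open>auto simp: mod1_eq_plus1\<close>)
next
  assume "cyc_order [x2,x3,x1]"
  then obtain y1 y2 y3 where h: "mod1_eq y1 x2" "mod1_eq y2 x3" "mod1_eq y3 x1" "y1 < y2" "y2 < y3" "y3 < y1 + 1"
    unfolding cyc3_iff by blast
  show "cyc_order [x1,x2,x3]" unfolding cyc3_iff
    by (rule exI[of _ "y3 - 1"], rule exI[of _ y1], rule exI[of _ y2])
       (use h in \<open>auto simp: mod1_eq_minus1\<close>)
qed

lemma cyc3_shift: "cyc_order [x1 + of_int j1, x2 + of_int j2, x3 + of_int j3] \<longleftrightarrow> cyc_order [x1,x2,x3]"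
  unfolding cyc3_iff mod1_eq_shift ..
lemma cyc4_shift: "cyc_order [x1 + of_int j1, x2 + of_int j2, x3 + of_int j3, x4 + of_int j4] \<longleftrightarrow> cyc_order [x1,x2,x3,x4]"
  unfolding cyc4_iff mod1_eq_shift ..

lemma cyc_map:
  assumes sm: "strict_mono h" and hj: "\<And>x (j::int). h (x + of_int j) = h x + of_int j" and c: "cyc_order xs"
  shows "cyc_order (map h xs)"
proof -
  obtain ys where ys: "length ys = length xs" "\<forall>i<length xs. mod1_eq (ys ! i) (xs ! i)"
     "sorted_wrt (<) ys" "ys \<noteq> [] \<longrightarrow> last ys < hd ys + 1"
    using c unfolding cyc_order_def by (elim exE conjE) (rule that)
  have h1: "h (x + 1) = h x + 1" for x using hj[of x 1] by simp
  have "length (map h ys) = length (map h xs)" using ys by simp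
  moreover have "\<forall>i<length (map h xs). mod1_eq (map h ys ! i) (map h xs ! i)"
  proof (intro allI impI)
    fix i assume "i < length (map h xs)"
    then have i: "i < length xs" by simp
    then obtain j :: int where "ys ! i = xs ! i + j" using ys(2) unfolding mod1_eq_def by blast
    then have "h (ys ! i) = h (xs ! i) + j" using hj by simp
    then show "mod1_eq (map h ys ! i) (map h xs ! i)" using i ys(1) unfolding mod1_eq_def by auto
  qed
  moreover have "sorted_wrt (<) (map h ys)" unfolding sorted_wrt_map
    by (rule sorted_wrt_mono_rel[OF _ ys(3)]) (use sm in \<open>simp add: strict_mono_less\<close>)
  moreover have "map h ys \<noteq> [] \<longrightarrow> last (map h ys) < hd (map h ys) + 1"
  proof
    assume "map h ys \<noteq> []"
    then have ne: "ys \<noteq> []" by simp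
    then have "h (last ys) < h (hd ys + 1)" using ys(4) sm by (simp add: strict_mono_less)
    then show "last (map h ys) < hd (map h ys) + 1" using ne h1 by (simp add: last_map hd_map)
  qed
  ultimately show ?thesis unfolding cyc_order_def by blast
qed


lemma floor_const:
  fixes g :: "real \<Rightarrow> real"
  assumes c: "continuous_on {0..1} g" and n: "\<And>l. 0 \<le> l \<Longrightarrow> l \<le> 1 \<Longrightarrow> nonint (g l)"
  shows "\<lfloor>g 0\<rfloor> = \<lfloor>g 1\<rfloor>"
proof (rule ccontr)
  assume ne: "\<lfloor>g 0\<rfloor> \<noteq> \<lfloor>g 1\<rfloor>"
  show False
  proof (cases "\<lfloor>g 0\<rfloor> < \<lfloor>g 1\<rfloor>")
    case True
    define k where "k = \<lfloor>g 1\<rfloor>"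
    have "g 0 \<le> of_int k" using True unfolding k_def by linarith
    moreover have "of_int k \<le> g 1" unfolding k_def by simp
    ultimately obtain l where "0 \<le> l" "l \<le> 1" "g l = of_int k" using IVT'[of g 0 "of_int k" 1] c by auto
    then show False using n[of l] unfolding nonint_def by auto
  next
    case False
    then have lt: "\<lfloor>g 1\<rfloor> < \<lfloor>g 0\<rfloor>" using ne by simp
    define k where "k = \<lfloor>g 0\<rfloor>"
    have "g 1 \<le> of_int k" using lt unfolding k_def by linarith
    moreover have "of_int k \<le> g 0" unfolding k_def by simp
    ultimately obtain l where "0 \<le> l" "l \<le> 1" "g l = of_int k" using IVT2'[of g 1 "of_int k" 0] c by auto
    then show False using n[of l] unfolding nonint_def by auto
  qed
qed

locale skew =
  fixes F :: "real \<Rightarrow> real \<Rightarrow> real" and \<omega> L a M :: real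
  assumes F_cont: "continuous_on UNIV (\<lambda>p. F (fst p) (snd p))"
    and F_per: "\<And>\<theta> x. F (\<theta> + 1) x = F \<theta> x"
    and F_deg: "\<And>\<theta> x. F \<theta> (x + 1) = F \<theta> x + 1"
    and F_mono: "\<And>\<theta>. strict_mono (F \<theta>)"
    and L_pos: "0 < L" and L_half: "L < 1 / 2"
    and M_pos: "0 < M"
    and wandering: "\<And>n::nat. 1 \<le> n \<Longrightarrow> \<not> (\<exists>\<theta> x. inW L a M \<theta> x \<and> inTW F \<omega> L a M (int n) \<theta> x)"
begin

abbreviation G where "G \<equiv> iter_lift F \<omega>"

lemma F_per_nat: "F (\<theta> + real n) x = F \<theta> x"
proof (induction n arbitrary: \<theta>)
  case 0 then show ?case by simp
next
  case (Suc n)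
  have "F (\<theta> + real (Suc n)) x = F ((\<theta> + real n) + 1) x" by (simp add: algebra_simps)
  also have "\<dots> = F \<theta> x" using F_per Suc by simp
  finally show ?case .
qed

lemma F_per_int: "F (\<theta> + of_int j) x = F \<theta> x"
proof (cases "0 \<le> j")
  case True
  then show ?thesis using F_per_nat[of \<theta> "nat j"] by simp
next
  case False
  have "F ((\<theta> + of_int j) + real (nat (-j))) x = F (\<theta> + of_int j) x" by (rule F_per_nat)
  then show ?thesis using False by simp
qed

lemma F_deg_nat: "F \<theta> (x + real n) = F \<theta> x + real n"
proof (induction n arbitrary: x)
  case 0 then show ?case by simp
next
  case (Suc n)
  have "F \<theta> (x + real (Suc n)) = F \<theta> ((x + real n) + 1)" by (simp add: algebra_simps)
  also have "\<dots> = F \<theta> x + real (Suc n)" using F_deg Suc by simp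
  finally show ?case .
qed

lemma F_deg_int: "F \<theta> (x + of_int j) = F \<theta> x + of_int j"
proof (cases "0 \<le> j")
  case True
  then show ?thesis using F_deg_nat[of \<theta> x "nat j"] by simp
next
  case False
  have "F \<theta> ((x + of_int j) + real (nat (-j))) = F \<theta> (x + of_int j) + real (nat (-j))" by (rule F_deg_nat)
  then show ?thesis using False by simp
qed

lemma G_per: "G n (s + of_int j) x = G n s x"
proof (induction n)
  case 0 then show ?case by simp
next
  case (Suc n)
  have "G (Suc n) (s + of_int j) x = F ((s + real n * \<omega>) + of_int j) (G n s x)" using Suc by (simp add: algebra_simps)
  then show ?case using F_per_int by simp
qed

lemma G_deg: "G n s (x + of_int j) = G n s x + of_int j"
  by (induction n) (simp_all add: F_deg_int)

lemma G_mono: "strict_mono (G n s)"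
proof (induction n)
  case 0 then show ?case by (simp add: strict_mono_def)
next
  case (Suc n)
  then show ?case using F_mono unfolding strict_mono_def by simp
qed

lemma G_less_iff: "G n s x < G n s y \<longleftrightarrow> x < y"
  using G_mono by (simp add: strict_mono_less)

lemma G_eq_iff: "G n s x = G n s y \<longleftrightarrow> x = y"
  using G_mono by (simp add: strict_mono_eq)

lemma G_cocycle: "G (p + q) s x = G q (s + real p * \<omega>) (G p s x)"
proof (induction q)
  case 0 then show ?case by simp
next
  case (Suc q)
  have "G (p + Suc q) s x = F (s + real (p + q) * \<omega>) (G (p + q) s x)" by simp
  also have "\<dots> = F (s + real p * \<omega> + real q * \<omega>) (G q (s + real p * \<omega>) (G p s x))"
    using Suc by (simp add: algebra_simps)
  also have "\<dots> = G (Suc q) (s + real p * \<omega>) (G p s x)" by simp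
  finally show ?case .
qed

lemma G_cont_x: "continuous_on UNIV (G n s)"
proof (induction n)
  case 0 then show ?case by (simp add: continuous_on_id)
next
  case (Suc n)
  have "continuous_on UNIV (\<lambda>x. (\<lambda>p. F (fst p) (snd p)) (s + real n * \<omega>, G n s x))"
    by (rule continuous_on_compose2[OF F_cont]) (auto intro!: continuous_intros Suc)
  then show ?case by simp
qed

lemma G_cont_s: "continuous_on UNIV (\<lambda>s. G n s x)"
proof (induction n)
  case 0 then show ?case by simp
next
  case (Suc n)
  have "continuous_on UNIV (\<lambda>s. (\<lambda>p. F (fst p) (snd p)) (s + real n * \<omega>, G n s x))"
    by (rule continuous_on_compose2[OF F_cont]) (auto intro!: continuous_intros Suc)
  then show ?case by simp
qed

lemma G_surj: "\<exists>x. G n s x = y"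
proof -
  define j where "j = \<lfloor>y - G n s 0\<rfloor>"
  have e: "G n s (of_int k) = G n s 0 + of_int k" for k using G_deg[of n s 0 k] by simp
  have "G n s (of_int j) \<le> y" using e[of j] unfolding j_def by linarith
  moreover have "y \<le> G n s (of_int (j + 1))" using e[of "j+1"] unfolding j_def by linarith
  moreover have "continuous_on {of_int j .. of_int (j+1)} (G n s)"
    using G_cont_x continuous_on_subset by blast
  ultimately show ?thesis using IVT'[of "G n s" "of_int j" y "of_int (j+1)"] by auto
qed

lemma G_inj_mod: assumes "G n s z = G n s x + of_int j" shows "z = x + of_int j"
proof -
  have "G n s z = G n s (x + of_int j)" using assms G_deg by simp
  then show ?thesis using G_eq_iff by blast
qed

lemma inW_shift: "inW L a M (\<theta> + of_int i) (x + of_int j) \<longleftrightarrow> inW L a M \<theta> x"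
proof -
  have A: "(\<exists>i'::int. \<bar>\<theta> + of_int i - of_int i'\<bar> < L / 2) \<longleftrightarrow> (\<exists>i'::int. \<bar>\<theta> - of_int i'\<bar> < L / 2)"
  proof
    assume "\<exists>i'::int. \<bar>\<theta> + of_int i - of_int i'\<bar> < L / 2"
    then obtain i' :: int where "\<bar>\<theta> + of_int i - of_int i'\<bar> < L / 2" by blast
    then show "\<exists>i'::int. \<bar>\<theta> - of_int i'\<bar> < L / 2" by (intro exI[of _ "i' - i"]) (simp add: algebra_simps)
  next
    assume "\<exists>i'::int. \<bar>\<theta> - of_int i'\<bar> < L / 2"
    then obtain i' :: int where "\<bar>\<theta> - of_int i'\<bar> < L / 2" by blast
    then show "\<exists>i'::int. \<bar>\<theta> + of_int i - of_int i'\<bar> < L / 2" by (intro exI[of _ "i' + i"]) (simp add: algebra_simps)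
  qed
  have B: "(\<exists>j'::int. a < x + of_int j - of_int j' \<and> x + of_int j - of_int j' < a + M) \<longleftrightarrow> (\<exists>j'::int. a < x - of_int j' \<and> x - of_int j' < a + M)"
  proof
    assume "\<exists>j'::int. a < x + of_int j - of_int j' \<and> x + of_int j - of_int j' < a + M"
    then obtain j' :: int where "a < x + of_int j - of_int j' \<and> x + of_int j - of_int j' < a + M" by blast
    then show "\<exists>j'::int. a < x - of_int j' \<and> x - of_int j' < a + M" by (intro exI[of _ "j' - j"]) (simp add: algebra_simps)
  next
    assume "\<exists>j'::int. a < x - of_int j' \<and> x - of_int j' < a + M"
    then obtain j' :: int where "a < x - of_int j' \<and> x - of_int j' < a + M" by blast
    then show "\<exists>j'::int. a < x + of_int j - of_int j' \<and> x + of_int j - of_int j' < a + M" by (intro exI[of _ "j' + j"]) (simp add: algebra_simps)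
  qed
  show ?thesis unfolding inW_def using A B by blast
qed

end

lemma convex_between:
  fixes lo hi e c l :: real
  assumes "lo < e" "e < hi" "lo < c" "c < hi" "0 \<le> l" "l \<le> 1"
  shows "lo < (1 - l) * e + l * c \<and> (1 - l) * e + l * c < hi"
proof -
  have e1: "(1 - l) * e + l * c - lo = (1 - l) * (e - lo) + l * (c - lo)" by (simp add: algebra_simps)
  have e2: "hi - ((1 - l) * e + l * c) = (1 - l) * (hi - e) + l * (hi - c)" by (simp add: algebra_simps)
  show ?thesis
  proof (cases "l < 1")
    case True
    have "(1 - l) * (e - lo) > 0" "l * (c - lo) \<ge> 0" "(1 - l) * (hi - e) > 0" "l * (hi - c) \<ge> 0"
      using assms True by (simp_all add: mult_pos_pos mult_nonneg_nonneg)
    then show ?thesis using e1 e2 by linarith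
  next
    case False
    then have "l = 1" using assms by simp
    then show ?thesis using assms by simp
  qed
qed

context skew begin

definition cmp :: "int \<Rightarrow> real \<Rightarrow> bool" where
  "cmp m t \<longleftrightarrow> (\<exists>i::int. \<bar>t - of_int m * \<omega> - of_int i\<bar> < L / 2)"

definition inE :: "nat \<Rightarrow> real \<Rightarrow> real \<Rightarrow> bool" where
  "inE p t e \<longleftrightarrow> G p (t - real p * \<omega>) a < e \<and> e < G p (t - real p * \<omega>) (a + M)"

definition Cpt :: "nat \<Rightarrow> real \<Rightarrow> real" where
  "Cpt p t = G p (t - real p * \<omega>) (a + M / 2)"

definition Dm :: "nat \<Rightarrow> nat \<Rightarrow> real \<Rightarrow> int" where
  "Dm p q t = \<lfloor>Cpt q t - Cpt p t\<rfloor>"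

abbreviation fib where "fib \<equiv> inTW F \<omega> L a M"

lemma inTW_nat: "fib (int p) t x \<longleftrightarrow> (\<exists>\<theta>0 x0. inW L a M \<theta>0 x0 \<and> mod1_eq (\<theta>0 + real p * \<omega>) t \<and> mod1_eq (G p \<theta>0 x0) x)"
  by (simp add: inTW_def)

lemma inTW_neg: "m < 0 \<Longrightarrow> fib m t x \<longleftrightarrow> inW L a M (t + real (nat (-m)) * \<omega>) (G (nat (-m)) t x)"
  by (simp add: inTW_def)

lemma fib_xshift: "fib m t (x + of_int j) \<longleftrightarrow> fib m t x"
proof (cases "0 \<le> m")
  case True
  then obtain p where m: "m = int p" using nonneg_int_cases by blast
  have "fib (int p) t (x + of_int j) \<longleftrightarrow> fib (int p) t x" unfolding inTW_nat mod1_eq_shift ..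
  then show ?thesis using m by simp
next
  case False
  then show ?thesis using inTW_neg[of m] G_deg inW_shift[of _ 0] by simp
qed

lemma C_inE: "inE p t (Cpt p t)"
  unfolding inE_def Cpt_def G_less_iff using M_pos by simp

lemma fib_inE: assumes "fib (int p) t x" shows "cmp (int p) t \<and> (\<exists>j::int. inE p t (x - of_int j))"
proof -
  obtain \<theta>0 x0 where h: "inW L a M \<theta>0 x0" "mod1_eq (\<theta>0 + real p * \<omega>) t" "mod1_eq (G p \<theta>0 x0) x"
    using assms inTW_nat by blast
  obtain i0 :: int where i0: "\<bar>\<theta>0 - of_int i0\<bar> < L / 2" using h(1) unfolding inW_def by blast
  obtain j0 :: int where j0: "a < x0 - of_int j0" "x0 - of_int j0 < a + M" using h(1) unfolding inW_def by blast
  obtain i1 :: int where i1: "\<theta>0 + real p * \<omega> = t + of_int i1" using h(2) unfolding mod1_eq_def by blast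
  obtain k :: int where k: "G p \<theta>0 x0 = x + of_int k" using h(3) unfolding mod1_eq_def by blast
  have s: "t - real p * \<omega> = \<theta>0 + of_int (- i1)" using i1 by simp
  have "t - real p * \<omega> - of_int (i0 - i1) = \<theta>0 - of_int i0" using i1 by simp
  then have "\<bar>t - of_int (int p) * \<omega> - of_int (i0 - i1)\<bar> < L / 2" using i0 by (simp only: of_int_of_nat_eq)
  then have "cmp (int p) t" unfolding cmp_def by blast
  moreover have "G p (t - real p * \<omega>) (x0 - of_int j0) = x - of_int (j0 - k)"
  proof -
    have "G p (t - real p * \<omega>) (x0 - of_int j0) = G p \<theta>0 (x0 + of_int (- j0))" unfolding s G_per by simp
    also have "\<dots> = G p \<theta>0 x0 + of_int (- j0)" by (rule G_deg)
    finally show ?thesis using k by simp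
  qed
  then have "inE p t (x - of_int (j0 - k))" unfolding inE_def
    using j0 G_less_iff by (metis add.commute diff_add_cancel diff_less_eq less_diff_eq)
  ultimately show ?thesis by blast
qed

lemma inE_fib: assumes "cmp (int p) t" "inE p t e" shows "fib (int p) t e"
proof -
  obtain y where y: "G p (t - real p * \<omega>) y = e" using G_surj by blast
  have ya: "a < y \<and> y < a + M" using assms(2) unfolding inE_def y[symmetric] G_less_iff .
  obtain i :: int where i: "\<bar>t - real p * \<omega> - of_int i\<bar> < L / 2" using assms(1) unfolding cmp_def by auto
  have "\<exists>i::int. \<bar>t - real p * \<omega> - of_int i\<bar> < L / 2" using i by blast
  moreover have "\<exists>j::int. a < y - of_int j \<and> y - of_int j < a + M" using ya by (intro exI[of _ 0]) simp
  ultimately have "inW L a M (t - real p * \<omega>) y" unfolding inW_def by blast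
  moreover have "mod1_eq (t - real p * \<omega> + real p * \<omega>) t" by (simp add: mod1_eq_refl)
  moreover have "mod1_eq (G p (t - real p * \<omega>) y) e" using y by (simp add: mod1_eq_refl)
  ultimately show ?thesis unfolding inTW_nat by blast
qed

lemma fib_disj_lt: assumes "p < q" "fib (int p) t x" "fib (int q) t x" shows False
proof -
  obtain \<theta>0 x0 where h0: "inW L a M \<theta>0 x0" "mod1_eq (\<theta>0 + real p * \<omega>) t" "mod1_eq (G p \<theta>0 x0) x"
    using assms(2) inTW_nat by blast
  obtain \<theta>1 x1 where h1: "inW L a M \<theta>1 x1" "mod1_eq (\<theta>1 + real q * \<omega>) t" "mod1_eq (G q \<theta>1 x1) x"
    using assms(3) inTW_nat by blast
  obtain i0 :: int where i0: "\<theta>0 + real p * \<omega> = t + of_int i0" using h0(2) unfolding mod1_eq_def by blast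
  obtain k0 :: int where k0: "G p \<theta>0 x0 = x + of_int k0" using h0(3) unfolding mod1_eq_def by blast
  obtain i1 :: int where i1: "\<theta>1 + real q * \<omega> = t + of_int i1" using h1(2) unfolding mod1_eq_def by blast
  obtain k1 :: int where k1: "G q \<theta>1 x1 = x + of_int k1" using h1(3) unfolding mod1_eq_def by blast
  define n where "n = q - p"
  have n1: "1 \<le> n" and qn: "q = n + p" using assms(1) unfolding n_def by auto
  have th: "\<theta>1 + real n * \<omega> = \<theta>0 + of_int (i1 - i0)"
    using i0 i1 qn by (simp add: algebra_simps)
  define z where "z = G n \<theta>1 x1"
  have "G q \<theta>1 x1 = G p (\<theta>1 + real n * \<omega>) z" unfolding qn z_def by (rule G_cocycle)
  also have "\<dots> = G p \<theta>0 z" unfolding th G_per ..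
  finally have "G p \<theta>0 z = G p \<theta>0 x0 + of_int (k1 - k0)" using k0 k1 by simp
  then have zz: "z = x0 + of_int (k1 - k0)" by (rule G_inj_mod)
  have m3: "mod1_eq (G n \<theta>1 x1) x0"
  proof -
    have "G n \<theta>1 x1 = x0 + of_int (k1 - k0)" using zz z_def by simp
    then show ?thesis using mod1_eq_add_int by metis
  qed
  have "fib (int n) \<theta>0 x0" unfolding inTW_nat
  proof (intro exI conjI)
    show "inW L a M \<theta>1 x1" by (rule h1(1))
    show "mod1_eq (\<theta>1 + real n * \<omega>) \<theta>0" unfolding th by (rule mod1_eq_add_int)
    show "mod1_eq (G n \<theta>1 x1) x0" by (rule m3)
  qed
  then show False using wandering[OF n1] h0(1) by blast
qed

lemma nonint_fib: assumes "p \<noteq> q" "fib (int p) t x" "fib (int q) t y" shows "nonint (y - x)"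
  unfolding nonint_def
proof (intro allI notI)
  fix j :: int assume "y - x = of_int j"
  then have "y = x + of_int j" by simp
  then have "fib (int q) t x" using assms(3) fib_xshift by simp
  then show False using assms fib_disj_lt by (metis linorder_neqE_nat)
qed

lemma floor_E:
  assumes pq: "p \<noteq> q" and c: "cmp (int p) t" "cmp (int q) t" and e: "inE p t e" "inE q t e'"
  shows "\<lfloor>e' - e\<rfloor> = Dm p q t"
proof -
  define g where "g l = ((1 - l) * e' + l * Cpt q t) - ((1 - l) * e + l * Cpt p t)" for l
  have "continuous_on {0..1} g" unfolding g_def by (intro continuous_intros)
  moreover have "nonint (g l)" if "0 \<le> l" "l \<le> 1" for l
  proof -
    have "inE p t ((1 - l) * e + l * Cpt p t)"
      using e(1) C_inE[of p t] convex_between that unfolding inE_def by blast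
    then have 1: "fib (int p) t ((1 - l) * e + l * Cpt p t)" using inE_fib c by blast
    have "inE q t ((1 - l) * e' + l * Cpt q t)"
      using e(2) C_inE[of q t] convex_between that unfolding inE_def by blast
    then have 2: "fib (int q) t ((1 - l) * e' + l * Cpt q t)" using inE_fib c by blast
    show ?thesis unfolding g_def using nonint_fib[OF pq 1 2] .
  qed
  ultimately have "\<lfloor>g 0\<rfloor> = \<lfloor>g 1\<rfloor>" by (rule floor_const)
  then show ?thesis unfolding g_def Dm_def by simp
qed

end

lemma floor_neg_nonint: "nonint x \<Longrightarrow> \<lfloor>- x\<rfloor> = - \<lfloor>x\<rfloor> - 1"
  using nonint_floor_less[of x] unfolding floor_eq_iff by linarith

context skew begin

lemma cmp_shift: "cmp (m + s) (t + of_int s * \<omega>) \<longleftrightarrow> cmp m t"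
proof -
  have eq: "t + of_int s * \<omega> - of_int (m + s) * \<omega> = t - of_int m * \<omega>" by (simp add: algebra_simps)
  show ?thesis unfolding cmp_def eq ..
qed

lemma C_fib: "cmp (int p) t \<Longrightarrow> fib (int p) t (Cpt p t)"
  using inE_fib C_inE by blast

lemma nonint_C: "p \<noteq> q \<Longrightarrow> cmp (int p) t \<Longrightarrow> cmp (int q) t \<Longrightarrow> nonint (Cpt q t - Cpt p t)"
  using nonint_fib C_fib by blast

lemma Dm_antisym: "p \<noteq> q \<Longrightarrow> cmp (int p) t \<Longrightarrow> cmp (int q) t \<Longrightarrow> Dm q p t = - Dm p q t - 1"
  unfolding Dm_def using floor_neg_nonint[OF nonint_C[of p q t]] by simp

lemma Cpt_per: "Cpt p (t + of_int j) = Cpt p t"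
proof -
  have eq: "t + of_int j - real p * \<omega> = (t - real p * \<omega>) + of_int j" by simp
  show ?thesis unfolding Cpt_def eq G_per ..
qed

lemma Dm_per: "Dm p q (t + of_int j) = Dm p q t"
  unfolding Dm_def Cpt_per ..

lemma floor_G: assumes "nonint (y - x)" shows "\<lfloor>G s t y - G s t x\<rfloor> = \<lfloor>y - x\<rfloor>"
proof -
  define k where "k = \<lfloor>y - x\<rfloor>"
  have "of_int k < y - x" using nonint_floor_less[OF assms] unfolding k_def .
  then have "G s t (x + of_int k) < G s t y" unfolding G_less_iff by simp
  then have 1: "G s t x + of_int k < G s t y" using G_deg by simp
  have "y - x < of_int k + 1" unfolding k_def by linarith
  then have "G s t y < G s t (x + of_int (k + 1))" unfolding G_less_iff by simp
  then have 2: "G s t y < G s t x + of_int k + 1" using G_deg[of s t x "k+1"] by simp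
  show ?thesis unfolding k_def[symmetric] floor_eq_iff using 1 2 by simp
qed

lemma Cpt_shift: "Cpt (p + s) (t + real s * \<omega>) = G s t (Cpt p t)"
proof -
  have eq: "t + real s * \<omega> - real (p + s) * \<omega> = t - real p * \<omega>" by (simp add: algebra_simps)
  have "Cpt (p + s) (t + real s * \<omega>) = G (p + s) (t - real p * \<omega>) (a + M / 2)" unfolding Cpt_def eq ..
  also have "\<dots> = G s (t - real p * \<omega> + real p * \<omega>) (Cpt p t)" unfolding Cpt_def by (rule G_cocycle)
  finally show ?thesis by simp
qed

lemma Dm_shift_nat:
  assumes "p \<noteq> q" "cmp (int p) t" "cmp (int q) t"
  shows "Dm (p + s) (q + s) (t + real s * \<omega>) = Dm p q t"
  unfolding Dm_def Cpt_shift using floor_G[OF nonint_C[OF assms]] .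

lemma Dm_shift_int:
  assumes "p \<noteq> q" "cmp (int p) t" "cmp (int q) t" "0 \<le> int p + s" "0 \<le> int q + s"
  shows "Dm (nat (int p + s)) (nat (int q + s)) (t + of_int s * \<omega>) = Dm p q t"
proof (cases "0 \<le> s")
  case True
  then obtain s' where s: "s = int s'" using nonneg_int_cases by blast
  have e: "nat (int p + s) = p + s'" "nat (int q + s) = q + s'" "of_int s * \<omega> = real s' * \<omega>" using s by auto
  show ?thesis unfolding e by (rule Dm_shift_nat[OF assms(1-3)])
next
  case False
  define s' where "s' = nat (- s)"
  define p' where "p' = nat (int p + s)"
  define q' where "q' = nat (int q + s)"
  define t' where "t' = t + of_int s * \<omega>"
  have pp: "p = p' + s'" "q = q' + s'" unfolding p'_def q'_def s'_def using assms False by auto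
  have tt: "t = t' + real s' * \<omega>" unfolding t'_def s'_def using False by simp
  have "p' \<noteq> q'" using pp assms(1) by simp
  moreover have "cmp (int p') t'"
    using assms(2) cmp_shift[of "int p" s t] unfolding p'_def t'_def using assms(4) by simp
  moreover have "cmp (int q') t'"
    using assms(3) cmp_shift[of "int q" s t] unfolding q'_def t'_def using assms(5) by simp
  ultimately have "Dm (p' + s') (q' + s') (t' + real s' * \<omega>) = Dm p' q' t'" by (rule Dm_shift_nat)
  then have "Dm p q t = Dm p' q' t'" unfolding pp[symmetric] tt[symmetric] .
  then show ?thesis unfolding p'_def[symmetric] q'_def[symmetric] t'_def[symmetric] by simp
qed

lemma Cpt_cont: "continuous_on UNIV (Cpt p)"
proof -
  have "continuous_on UNIV (\<lambda>t. (\<lambda>s. G p s (a + M / 2)) (t - real p * \<omega>))"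
    by (rule continuous_on_compose2[OF G_cont_s]) (auto intro!: continuous_intros)
  then show ?thesis unfolding Cpt_def by simp
qed

lemma Dm_const:
  assumes "p \<noteq> q" and c: "\<And>l. 0 \<le> l \<Longrightarrow> l \<le> 1 \<Longrightarrow> cmp (int p) (t1 + l * (t2 - t1)) \<and> cmp (int q) (t1 + l * (t2 - t1))"
  shows "Dm p q t1 = Dm p q t2"
proof -
  define g where "g l = Cpt q (t1 + l * (t2 - t1)) - Cpt p (t1 + l * (t2 - t1))" for l
  have cq: "continuous_on {0..1} (\<lambda>l. Cpt q (t1 + l * (t2 - t1)))"
    by (rule continuous_on_compose2[OF Cpt_cont]) (auto intro!: continuous_intros)
  have cp: "continuous_on {0..1} (\<lambda>l. Cpt p (t1 + l * (t2 - t1)))"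
    by (rule continuous_on_compose2[OF Cpt_cont]) (auto intro!: continuous_intros)
  have "continuous_on {0..1} g" unfolding g_def by (intro continuous_intros cq cp)
  moreover have "nonint (g l)" if "0 \<le> l" "l \<le> 1" for l
    unfolding g_def using nonint_C[OF assms(1)] c[OF that] by blast
  ultimately have "\<lfloor>g 0\<rfloor> = \<lfloor>g 1\<rfloor>" by (rule floor_const)
  then show ?thesis unfolding g_def Dm_def by simp
qed

lemma cyc4_E:
  assumes d: "distinct [p1,p2,p3,p4]"
    and c: "cmp (int p1) t" "cmp (int p2) t" "cmp (int p3) t" "cmp (int p4) t"
    and e: "inE p1 t e1" "inE p2 t e2" "inE p3 t e3" "inE p4 t e4"
  shows "cyc_order [e1,e2,e3,e4] \<longleftrightarrow> Dm p1 p3 t - Dm p1 p2 t \<le> Dm p2 p3 t \<and> Dm p1 p4 t - Dm p1 p3 t \<le> Dm p3 p4 t"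
proof -
  have f: "fib (int p1) t e1" "fib (int p2) t e2" "fib (int p3) t e3" "fib (int p4) t e4"
    using inE_fib[OF c(1) e(1)] inE_fib[OF c(2) e(2)] inE_fib[OF c(3) e(3)] inE_fib[OF c(4) e(4)] by -
  have dd: "p1 \<noteq> p2" "p1 \<noteq> p3" "p1 \<noteq> p4" "p2 \<noteq> p3" "p3 \<noteq> p4" using d by auto
  have n: "nonint (e2 - e1)" "nonint (e3 - e1)" "nonint (e4 - e1)" "nonint (e3 - e2)" "nonint (e4 - e3)"
    using nonint_fib[OF dd(1) f(1) f(2)] nonint_fib[OF dd(2) f(1) f(3)] nonint_fib[OF dd(3) f(1) f(4)]
      nonint_fib[OF dd(4) f(2) f(3)] nonint_fib[OF dd(5) f(3) f(4)] by -
  have fl: "\<lfloor>e2 - e1\<rfloor> = Dm p1 p2 t" "\<lfloor>e3 - e1\<rfloor> = Dm p1 p3 t" "\<lfloor>e4 - e1\<rfloor> = Dm p1 p4 t"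
     "\<lfloor>e3 - e2\<rfloor> = Dm p2 p3 t" "\<lfloor>e4 - e3\<rfloor> = Dm p3 p4 t"
    using floor_E[OF dd(1) c(1) c(2) e(1) e(2)] floor_E[OF dd(2) c(1) c(3) e(1) e(3)] floor_E[OF dd(3) c(1) c(4) e(1) e(4)]
      floor_E[OF dd(4) c(2) c(3) e(2) e(3)] floor_E[OF dd(5) c(3) c(4) e(3) e(4)] by -
  show ?thesis using cyc4_floor[OF n] unfolding fl .
qed

lemma cyc3_E:
  assumes d: "distinct [p1,p2,p3]"
    and c: "cmp (int p1) t" "cmp (int p2) t" "cmp (int p3) t"
    and e: "inE p1 t e1" "inE p2 t e2" "inE p3 t e3"
  shows "cyc_order [e1,e2,e3] \<longleftrightarrow> Dm p1 p3 t - Dm p1 p2 t \<le> Dm p2 p3 t"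
proof -
  have f: "fib (int p1) t e1" "fib (int p2) t e2" "fib (int p3) t e3"
    using inE_fib[OF c(1) e(1)] inE_fib[OF c(2) e(2)] inE_fib[OF c(3) e(3)] by -
  have dd: "p1 \<noteq> p2" "p1 \<noteq> p3" "p2 \<noteq> p3" using d by auto
  have n: "nonint (e2 - e1)" "nonint (e3 - e1)" "nonint (e3 - e2)"
    using nonint_fib[OF dd(1) f(1) f(2)] nonint_fib[OF dd(2) f(1) f(3)] nonint_fib[OF dd(3) f(2) f(3)] by -
  have fl: "\<lfloor>e2 - e1\<rfloor> = Dm p1 p2 t" "\<lfloor>e3 - e1\<rfloor> = Dm p1 p3 t" "\<lfloor>e3 - e2\<rfloor> = Dm p2 p3 t"
    using floor_E[OF dd(1) c(1) c(2) e(1) e(2)] floor_E[OF dd(2) c(1) c(3) e(1) e(3)] floor_E[OF dd(3) c(2) c(3) e(2) e(3)] by -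
  show ?thesis using cyc3_floor[OF n] unfolding fl .
qed

lemma P4_nonneg:
  assumes d: "distinct [p1,p2,p3,p4]"
    and c: "cmp (int p1) t" "cmp (int p2) t" "cmp (int p3) t" "cmp (int p4) t"
  shows "(\<forall>x1 x2 x3 x4. fib (int p1) t x1 \<and> fib (int p2) t x2 \<and> fib (int p3) t x3 \<and> fib (int p4) t x4
            \<longrightarrow> cyc_order [x1,x2,x3,x4]) \<longleftrightarrow> cyc_order [Cpt p1 t, Cpt p2 t, Cpt p3 t, Cpt p4 t]"
proof
  assume "\<forall>x1 x2 x3 x4. fib (int p1) t x1 \<and> fib (int p2) t x2 \<and> fib (int p3) t x3 \<and> fib (int p4) t x4
            \<longrightarrow> cyc_order [x1,x2,x3,x4]"
  then show "cyc_order [Cpt p1 t, Cpt p2 t, Cpt p3 t, Cpt p4 t]" using C_fib c by blast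
next
  assume cc: "cyc_order [Cpt p1 t, Cpt p2 t, Cpt p3 t, Cpt p4 t]"
  show "\<forall>x1 x2 x3 x4. fib (int p1) t x1 \<and> fib (int p2) t x2 \<and> fib (int p3) t x3 \<and> fib (int p4) t x4
            \<longrightarrow> cyc_order [x1,x2,x3,x4]"
  proof (intro allI impI)
    fix x1 x2 x3 x4
    assume ff: "fib (int p1) t x1 \<and> fib (int p2) t x2 \<and> fib (int p3) t x3 \<and> fib (int p4) t x4"
    obtain j1 :: int where j1: "inE p1 t (x1 - of_int j1)" using fib_inE ff by blast
    obtain j2 :: int where j2: "inE p2 t (x2 - of_int j2)" using fib_inE ff by blast
    obtain j3 :: int where j3: "inE p3 t (x3 - of_int j3)" using fib_inE ff by blast
    obtain j4 :: int where j4: "inE p4 t (x4 - of_int j4)" using fib_inE ff by blast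
    note j = j1 j2 j3 j4
    have "cyc_order [x1,x2,x3,x4] \<longleftrightarrow> cyc_order [x1 - of_int j1, x2 - of_int j2, x3 - of_int j3, x4 - of_int j4]"
      using cyc4_shift[of "x1 - of_int j1" j1 "x2 - of_int j2" j2 "x3 - of_int j3" j3 "x4 - of_int j4" j4] by simp
    also have "\<dots> \<longleftrightarrow> cyc_order [Cpt p1 t, Cpt p2 t, Cpt p3 t, Cpt p4 t]"
      using cyc4_E[OF d c j] cyc4_E[OF d c C_inE C_inE C_inE C_inE] by simp
    finally show "cyc_order [x1,x2,x3,x4]" using cc by simp
  qed
qed

lemma P3_nonneg:
  assumes d: "distinct [p1,p2,p3]"
    and c: "cmp (int p1) t" "cmp (int p2) t" "cmp (int p3) t"
  shows "(\<forall>x1 x2 x3. fib (int p1) t x1 \<and> fib (int p2) t x2 \<and> fib (int p3) t x3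
            \<longrightarrow> cyc_order [x1,x2,x3]) \<longleftrightarrow> cyc_order [Cpt p1 t, Cpt p2 t, Cpt p3 t]"
proof
  assume "\<forall>x1 x2 x3. fib (int p1) t x1 \<and> fib (int p2) t x2 \<and> fib (int p3) t x3
            \<longrightarrow> cyc_order [x1,x2,x3]"
  then show "cyc_order [Cpt p1 t, Cpt p2 t, Cpt p3 t]" using C_fib c by blast
next
  assume cc: "cyc_order [Cpt p1 t, Cpt p2 t, Cpt p3 t]"
  show "\<forall>x1 x2 x3. fib (int p1) t x1 \<and> fib (int p2) t x2 \<and> fib (int p3) t x3
            \<longrightarrow> cyc_order [x1,x2,x3]"
  proof (intro allI impI)
    fix x1 x2 x3
    assume ff: "fib (int p1) t x1 \<and> fib (int p2) t x2 \<and> fib (int p3) t x3"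
    obtain j1 :: int where j1: "inE p1 t (x1 - of_int j1)" using fib_inE ff by blast
    obtain j2 :: int where j2: "inE p2 t (x2 - of_int j2)" using fib_inE ff by blast
    obtain j3 :: int where j3: "inE p3 t (x3 - of_int j3)" using fib_inE ff by blast
    note j = j1 j2 j3
    have "cyc_order [x1,x2,x3] \<longleftrightarrow> cyc_order [x1 - of_int j1, x2 - of_int j2, x3 - of_int j3]"
      using cyc3_shift[of "x1 - of_int j1" j1 "x2 - of_int j2" j2 "x3 - of_int j3" j3] by simp
    also have "\<dots> \<longleftrightarrow> cyc_order [Cpt p1 t, Cpt p2 t, Cpt p3 t]"
      using cyc3_E[OF d c j] cyc3_E[OF d c C_inE C_inE C_inE] by simp
    finally show "cyc_order [x1,x2,x3]" using cc by simp
  qed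
qed

end

lemma mod1_close: "mod1_eq y1 x \<Longrightarrow> mod1_eq y2 x \<Longrightarrow> y1 < y2 \<Longrightarrow> y2 < y1 + 1 \<Longrightarrow> False"
proof -
  assume "mod1_eq y1 x" "mod1_eq y2 x" "y1 < y2" "y2 < y1 + 1"
  then obtain j1 j2 :: int where j: "y1 = x + of_int j1" "y2 = x + of_int j2" "y1 < y2" "y2 < y1 + 1"
    unfolding mod1_eq_def by blast
  then have "j1 < j2" "j2 < j1 + 1" by simp_all
  then show False by simp
qed

lemma cyc4_distinct: "cyc_order [x1,x2,x3,x4] \<Longrightarrow> distinct [x1,x2,x3,x4]"
proof -
  assume "cyc_order [x1,x2,x3,x4]"
  then obtain y1 y2 y3 y4 where h: "mod1_eq y1 x1" "mod1_eq y2 x2" "mod1_eq y3 x3" "mod1_eq y4 x4" "y1 < y2" "y2 < y3" "y3 < y4" "y4 < y1 + 1"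
    unfolding cyc4_iff by blast
  have d12: "x1 \<noteq> x2"
  proof
    assume e: "x1 = x2"
    have "y1 < y2" "y2 < y1 + 1" using h by linarith+
    then show False using mod1_close[of y1 x1 y2] h e by simp
  qed
  have d13: "x1 \<noteq> x3"
  proof
    assume e: "x1 = x3"
    have "y1 < y3" "y3 < y1 + 1" using h by linarith+
    then show False using mod1_close[of y1 x1 y3] h e by simp
  qed
  have d14: "x1 \<noteq> x4"
  proof
    assume e: "x1 = x4"
    have "y1 < y4" "y4 < y1 + 1" using h by linarith+
    then show False using mod1_close[of y1 x1 y4] h e by simp
  qed
  have d23: "x2 \<noteq> x3"
  proof
    assume e: "x2 = x3"
    have "y2 < y3" "y3 < y2 + 1" using h by linarith+
    then show False using mod1_close[of y2 x2 y3] h e by simp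
  qed
  have d24: "x2 \<noteq> x4"
  proof
    assume e: "x2 = x4"
    have "y2 < y4" "y4 < y2 + 1" using h by linarith+
    then show False using mod1_close[of y2 x2 y4] h e by simp
  qed
  have d34: "x3 \<noteq> x4"
  proof
    assume e: "x3 = x4"
    have "y3 < y4" "y4 < y3 + 1" using h by linarith+
    then show False using mod1_close[of y3 x3 y4] h e by simp
  qed
  show ?thesis using d12 d13 d14 d23 d24 d34 by simp
qed

lemma cyc3_distinct: "cyc_order [x1,x2,x3] \<Longrightarrow> distinct [x1,x2,x3]"
proof -
  assume "cyc_order [x1,x2,x3]"
  then obtain y1 y2 y3 where h: "mod1_eq y1 x1" "mod1_eq y2 x2" "mod1_eq y3 x3" "y1 < y2" "y2 < y3" "y3 < y1 + 1"
    unfolding cyc3_iff by blast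
  have d12: "x1 \<noteq> x2"
  proof
    assume e: "x1 = x2"
    have "y1 < y2" "y2 < y1 + 1" using h by linarith+
    then show False using mod1_close[of y1 x1 y2] h e by simp
  qed
  have d13: "x1 \<noteq> x3"
  proof
    assume e: "x1 = x3"
    have "y1 < y3" "y3 < y1 + 1" using h by linarith+
    then show False using mod1_close[of y1 x1 y3] h e by simp
  qed
  have d23: "x2 \<noteq> x3"
  proof
    assume e: "x2 = x3"
    have "y2 < y3" "y3 < y2 + 1" using h by linarith+
    then show False using mod1_close[of y2 x2 y3] h e by simp
  qed
  show ?thesis using d12 d13 d23 by simp
qed

lemma abs_scale: fixes d B l :: real assumes "\<bar>d\<bar> \<le> B" "0 \<le> l" "l \<le> 1" shows "\<bar>l * d\<bar> \<le> B"
proof -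
  have "\<bar>l * d\<bar> = l * \<bar>d\<bar>" using assms by (simp add: abs_mult)
  also have "\<dots> \<le> 1 * \<bar>d\<bar>" using assms by (intro mult_right_mono) auto
  finally show ?thesis using assms by simp
qed

lemma abs_comb: fixes x y B l :: real assumes "\<bar>x\<bar> \<le> B" "\<bar>y\<bar> \<le> B" "0 \<le> l" "l \<le> 1"
  shows "\<bar>l * x - (1 - l) * y\<bar> \<le> B"
proof -
  have "\<bar>l * x\<bar> = l * \<bar>x\<bar>" "\<bar>(1 - l) * y\<bar> = (1 - l) * \<bar>y\<bar>" using assms by (simp_all add: abs_mult)
  moreover have "l * \<bar>x\<bar> \<le> l * B" "(1 - l) * \<bar>y\<bar> \<le> (1 - l) * B" using assms by (simp_all add: mult_left_mono)
  ultimately have "\<bar>l * x\<bar> + \<bar>(1 - l) * y\<bar> \<le> B" by (simp add: algebra_simps)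
  then show ?thesis using abs_triangle_ineq4[of "l * x" "(1 - l) * y"] by linarith
qed

context skew begin

definition Pf :: "int list \<Rightarrow> real \<Rightarrow> bool" where
  "Pf ms \<theta> \<longleftrightarrow> (\<forall>xs. length xs = length ms \<and> (\<forall>i<length ms. fib (ms ! i) \<theta> (xs ! i)) \<longrightarrow> cyc_order xs)"

lemma lhd_unfold: "lhd F \<omega> L a M ms J \<longleftrightarrow> 3 \<le> length ms \<and> (\<forall>\<theta>\<in>J. \<forall>m\<in>set ms. cmp m \<theta>) \<and> (\<forall>\<theta>\<in>J. Pf ms \<theta>)"
  unfolding lhd_def comparable_def cmp_def Pf_def by blast

lemma cmp_intro: "\<bar>t - of_int m * \<omega> - of_int i\<bar> < L / 2 \<Longrightarrow> cmp m t"
  unfolding cmp_def by blast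

lemma fib_shift:
  assumes "0 \<le> m + int N"
  shows "fib m \<theta> x \<longleftrightarrow> fib (m + int N) (\<theta> + real N * \<omega>) (G N \<theta> x)"
proof (cases "0 \<le> m")
  case True
  then obtain p where m: "m = int p" using nonneg_int_cases by blast
  have mN: "m + int N = int (p + N)" using m by simp
  have "fib (int p) \<theta> x \<longleftrightarrow> fib (int (p + N)) (\<theta> + real N * \<omega>) (G N \<theta> x)"
    unfolding inTW_nat
  proof
    assume "\<exists>\<theta>0 x0. inW L a M \<theta>0 x0 \<and> mod1_eq (\<theta>0 + real p * \<omega>) \<theta> \<and> mod1_eq (G p \<theta>0 x0) x"
    then obtain \<theta>0 x0 where h: "inW L a M \<theta>0 x0" "mod1_eq (\<theta>0 + real p * \<omega>) \<theta>" "mod1_eq (G p \<theta>0 x0) x" by blast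
    obtain i :: int where i: "\<theta>0 + real p * \<omega> = \<theta> + of_int i" using h(2) unfolding mod1_eq_def by blast
    obtain k :: int where k: "G p \<theta>0 x0 = x + of_int k" using h(3) unfolding mod1_eq_def by blast
    have "\<theta>0 + real (p + N) * \<omega> = (\<theta> + real N * \<omega>) + of_int i" using i by (simp add: algebra_simps)
    then have 1: "mod1_eq (\<theta>0 + real (p + N) * \<omega>) (\<theta> + real N * \<omega>)" unfolding mod1_eq_def by blast
    have "G (p + N) \<theta>0 x0 = G N (\<theta>0 + real p * \<omega>) (G p \<theta>0 x0)" by (rule G_cocycle)
    also have "\<dots> = G N \<theta> x + of_int k" unfolding i k G_per G_deg ..
    finally have 2: "mod1_eq (G (p + N) \<theta>0 x0) (G N \<theta> x)" unfolding mod1_eq_def by blast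
    show "\<exists>\<theta>0 x0. inW L a M \<theta>0 x0 \<and> mod1_eq (\<theta>0 + real (p + N) * \<omega>) (\<theta> + real N * \<omega>) \<and> mod1_eq (G (p + N) \<theta>0 x0) (G N \<theta> x)"
      using h(1) 1 2 by blast
  next
    assume "\<exists>\<theta>0 x0. inW L a M \<theta>0 x0 \<and> mod1_eq (\<theta>0 + real (p + N) * \<omega>) (\<theta> + real N * \<omega>) \<and> mod1_eq (G (p + N) \<theta>0 x0) (G N \<theta> x)"
    then obtain \<theta>0 x0 where h: "inW L a M \<theta>0 x0" "mod1_eq (\<theta>0 + real (p + N) * \<omega>) (\<theta> + real N * \<omega>)" "mod1_eq (G (p + N) \<theta>0 x0) (G N \<theta> x)" by blast
    obtain i :: int where i0: "\<theta>0 + real (p + N) * \<omega> = \<theta> + real N * \<omega> + of_int i" using h(2) unfolding mod1_eq_def by blast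
    obtain k :: int where k: "G (p + N) \<theta>0 x0 = G N \<theta> x + of_int k" using h(3) unfolding mod1_eq_def by blast
    have i: "\<theta>0 + real p * \<omega> = \<theta> + of_int i" using i0 by (simp add: algebra_simps)
    then have 1: "mod1_eq (\<theta>0 + real p * \<omega>) \<theta>" unfolding mod1_eq_def by blast
    have "G (p + N) \<theta>0 x0 = G N (\<theta>0 + real p * \<omega>) (G p \<theta>0 x0)" by (rule G_cocycle)
    also have "\<dots> = G N \<theta> (G p \<theta>0 x0)" unfolding i G_per ..
    finally have "G N \<theta> (G p \<theta>0 x0) = G N \<theta> x + of_int k" using k by simp
    then have "G p \<theta>0 x0 = x + of_int k" by (rule G_inj_mod)
    then have 2: "mod1_eq (G p \<theta>0 x0) x" unfolding mod1_eq_def by blast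
    show "\<exists>\<theta>0 x0. inW L a M \<theta>0 x0 \<and> mod1_eq (\<theta>0 + real p * \<omega>) \<theta> \<and> mod1_eq (G p \<theta>0 x0) x"
      using h(1) 1 2 by blast
  qed
  then show ?thesis using mN m by simp
next
  case False
  define q where "q = nat (- m)"
  have m: "m = - int q" and qN: "q \<le> N" using False assms unfolding q_def by auto
  have mN: "m + int N = int (N - q)" using m qN by simp
  have lhs: "fib m \<theta> x \<longleftrightarrow> inW L a M (\<theta> + real q * \<omega>) (G q \<theta> x)"
    using inTW_neg[of m] False unfolding q_def by simp
  have coc: "G N \<theta> x = G (N - q) (\<theta> + real q * \<omega>) (G q \<theta> x)"
    using G_cocycle[of q "N - q" \<theta> x] qN by simp
  have "inW L a M (\<theta> + real q * \<omega>) (G q \<theta> x) \<longleftrightarrow> fib (int (N - q)) (\<theta> + real N * \<omega>) (G N \<theta> x)"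
    unfolding inTW_nat
  proof
    assume h: "inW L a M (\<theta> + real q * \<omega>) (G q \<theta> x)"
    have 1: "mod1_eq (\<theta> + real q * \<omega> + real (N - q) * \<omega>) (\<theta> + real N * \<omega>)"
      using qN by (simp add: algebra_simps of_nat_diff mod1_eq_refl)
    have 2: "mod1_eq (G (N - q) (\<theta> + real q * \<omega>) (G q \<theta> x)) (G N \<theta> x)" unfolding coc by (rule mod1_eq_refl)
    show "\<exists>\<theta>0 x0. inW L a M \<theta>0 x0 \<and> mod1_eq (\<theta>0 + real (N - q) * \<omega>) (\<theta> + real N * \<omega>) \<and> mod1_eq (G (N - q) \<theta>0 x0) (G N \<theta> x)"
      using h 1 2 by blast
  next
    assume "\<exists>\<theta>0 x0. inW L a M \<theta>0 x0 \<and> mod1_eq (\<theta>0 + real (N - q) * \<omega>) (\<theta> + real N * \<omega>) \<and> mod1_eq (G (N - q) \<theta>0 x0) (G N \<theta> x)"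
    then obtain \<theta>0 x0 where h: "inW L a M \<theta>0 x0" "mod1_eq (\<theta>0 + real (N - q) * \<omega>) (\<theta> + real N * \<omega>)" "mod1_eq (G (N - q) \<theta>0 x0) (G N \<theta> x)" by blast
    obtain i :: int where i0: "\<theta>0 + real (N - q) * \<omega> = \<theta> + real N * \<omega> + of_int i" using h(2) unfolding mod1_eq_def by blast
    obtain k :: int where k: "G (N - q) \<theta>0 x0 = G N \<theta> x + of_int k" using h(3) unfolding mod1_eq_def by blast
    have i: "\<theta>0 = (\<theta> + real q * \<omega>) + of_int i" using i0 qN by (simp add: algebra_simps of_nat_diff)
    have "G N \<theta> x = G (N - q) \<theta>0 (G q \<theta> x)" unfolding coc i G_per ..
    then have "G (N - q) \<theta>0 x0 = G (N - q) \<theta>0 (G q \<theta> x) + of_int k" using k by simp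
    then have "x0 = G q \<theta> x + of_int k" by (rule G_inj_mod)
    then have "inW L a M ((\<theta> + real q * \<omega>) + of_int i) (G q \<theta> x + of_int k)" using h(1) i by simp
    then show "inW L a M (\<theta> + real q * \<omega>) (G q \<theta> x)" unfolding inW_shift .
  qed
  then show ?thesis unfolding lhs mN .
qed

lemma G_inv_props:
  fixes N :: nat and \<theta> :: real
  defines "hi \<equiv> inv (G N \<theta>)"
  shows "\<And>y. G N \<theta> (hi y) = y" "\<And>x. hi (G N \<theta> x) = x" "strict_mono hi"
    "\<And>x (j::int). hi (x + of_int j) = hi x + of_int j"
proof -
  have surj: "surj (G N \<theta>)" using G_surj by (metis surjI)
  have inj: "inj (G N \<theta>)" using G_mono strict_mono_imp_inj_on by blast
  show r: "\<And>y. G N \<theta> (hi y) = y" unfolding hi_def using surj by (simp add: surj_f_inv_f)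
  show "\<And>x. hi (G N \<theta> x) = x" unfolding hi_def using inj by simp
  show "strict_mono hi"
    unfolding strict_mono_def
  proof (intro allI impI)
    fix x y :: real assume "x < y"
    then show "hi x < hi y" using r[of x] r[of y] G_less_iff[of N \<theta> "hi y" "hi x"] by (metis not_less_iff_gr_or_eq)
  qed
  show "\<And>x (j::int). hi (x + of_int j) = hi x + of_int j"
  proof -
    fix x :: real and j :: int
    have "G N \<theta> (hi x + of_int j) = x + of_int j" using G_deg r by simp
    then have "G N \<theta> (hi (x + of_int j)) = G N \<theta> (hi x + of_int j)" using r by simp
    then show "hi (x + of_int j) = hi x + of_int j" using G_eq_iff by blast
  qed
qed

lemma P_shift:
  assumes "\<forall>m\<in>set ms. 0 \<le> m + int N"
  shows "Pf ms \<theta> \<longleftrightarrow> Pf (map (\<lambda>m. m + int N) ms) (\<theta> + real N * \<omega>)"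
proof
  assume P: "Pf ms \<theta>"
  show "Pf (map (\<lambda>m. m + int N) ms) (\<theta> + real N * \<omega>)" unfolding Pf_def
  proof (intro allI impI)
    fix xs assume h: "length xs = length (map (\<lambda>m. m + int N) ms) \<and>
       (\<forall>i<length (map (\<lambda>m. m + int N) ms). fib (map (\<lambda>m. m + int N) ms ! i) (\<theta> + real N * \<omega>) (xs ! i))"
    define hi where "hi = inv (G N \<theta>)"
    note hp = G_inv_props[of N \<theta>, folded hi_def]
    have "length (map hi xs) = length ms" using h by simp
    moreover have "\<forall>i<length ms. fib (ms ! i) \<theta> (map hi xs ! i)"
    proof (intro allI impI)
      fix i assume i: "i < length ms"
      have "fib (ms ! i + int N) (\<theta> + real N * \<omega>) (G N \<theta> (hi (xs ! i)))" using h i hp(1) by simp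
      then show "fib (ms ! i) \<theta> (map hi xs ! i)" using fib_shift[of "ms ! i" N \<theta>] assms i h by simp
    qed
    ultimately have "cyc_order (map hi xs)" using P unfolding Pf_def by blast
    then have "cyc_order (map (G N \<theta>) (map hi xs))" by (rule cyc_map[OF G_mono G_deg])
    then show "cyc_order xs" using hp(1) by (simp add: map_idI)
  qed
next
  assume P: "Pf (map (\<lambda>m. m + int N) ms) (\<theta> + real N * \<omega>)"
  show "Pf ms \<theta>" unfolding Pf_def
  proof (intro allI impI)
    fix xs assume h: "length xs = length ms \<and> (\<forall>i<length ms. fib (ms ! i) \<theta> (xs ! i))"
    define hi where "hi = inv (G N \<theta>)"
    note hp = G_inv_props[of N \<theta>, folded hi_def]
    have "length (map (G N \<theta>) xs) = length (map (\<lambda>m. m + int N) ms)" using h by simp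
    moreover have "\<forall>i<length (map (\<lambda>m. m + int N) ms). fib (map (\<lambda>m. m + int N) ms ! i) (\<theta> + real N * \<omega>) (map (G N \<theta>) xs ! i)"
    proof (intro allI impI)
      fix i assume "i < length (map (\<lambda>m. m + int N) ms)"
      then have i: "i < length ms" by simp
      have "fib (ms ! i) \<theta> (xs ! i)" using h i by blast
      moreover have "0 \<le> ms ! i + int N" using assms i nth_mem by blast
      ultimately have "fib (ms ! i + int N) (\<theta> + real N * \<omega>) (G N \<theta> (xs ! i))" using fib_shift by blast
      then show "fib (map (\<lambda>m. m + int N) ms ! i) (\<theta> + real N * \<omega>) (map (G N \<theta>) xs ! i)" using i h by simp
    qed
    ultimately have "cyc_order (map (G N \<theta>) xs)" using P unfolding Pf_def by blast
    then have "cyc_order (map hi (map (G N \<theta>) xs))" by (rule cyc_map[OF hp(3) hp(4)])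
    then show "cyc_order xs" using hp(2) by (simp add: map_idI)
  qed
qed

lemma Pf4: "Pf [m1,m2,m3,m4] \<theta> \<longleftrightarrow> (\<forall>x1 x2 x3 x4. fib m1 \<theta> x1 \<and> fib m2 \<theta> x2 \<and> fib m3 \<theta> x3 \<and> fib m4 \<theta> x4 \<longrightarrow> cyc_order [x1,x2,x3,x4])"
proof
  assume P: "Pf [m1,m2,m3,m4] \<theta>"
  show "\<forall>x1 x2 x3 x4. fib m1 \<theta> x1 \<and> fib m2 \<theta> x2 \<and> fib m3 \<theta> x3 \<and> fib m4 \<theta> x4 \<longrightarrow> cyc_order [x1,x2,x3,x4]"
  proof (intro allI impI)
    fix x1 x2 x3 x4 assume "fib m1 \<theta> x1 \<and> fib m2 \<theta> x2 \<and> fib m3 \<theta> x3 \<and> fib m4 \<theta> x4"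
    then have "\<forall>i<4. fib ([m1,m2,m3,m4] ! i) \<theta> ([x1,x2,x3,x4] ! i)" unfolding all4 by simp
    then show "cyc_order [x1,x2,x3,x4]" using P unfolding Pf_def by simp
  qed
next
  assume P: "\<forall>x1 x2 x3 x4. fib m1 \<theta> x1 \<and> fib m2 \<theta> x2 \<and> fib m3 \<theta> x3 \<and> fib m4 \<theta> x4 \<longrightarrow> cyc_order [x1,x2,x3,x4]"
  show "Pf [m1,m2,m3,m4] \<theta>" unfolding Pf_def
  proof (intro allI impI)
    fix xs assume h: "length xs = length [m1,m2,m3,m4] \<and> (\<forall>i<length [m1,m2,m3,m4]. fib ([m1,m2,m3,m4] ! i) \<theta> (xs ! i))"
    then have "length xs = 4" by simp
    then obtain y1 y2 y3 y4 where xs: "xs = [y1,y2,y3,y4]" using len4_cases by blast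
    have "\<forall>i<4. fib ([m1,m2,m3,m4] ! i) \<theta> ([y1,y2,y3,y4] ! i)" using h xs by simp
    then have "fib m1 \<theta> y1 \<and> fib m2 \<theta> y2 \<and> fib m3 \<theta> y3 \<and> fib m4 \<theta> y4" unfolding all4 by simp
    then show "cyc_order xs" using P xs by blast
  qed
qed

lemma Pf3: "Pf [m1,m2,m3] \<theta> \<longleftrightarrow> (\<forall>x1 x2 x3. fib m1 \<theta> x1 \<and> fib m2 \<theta> x2 \<and> fib m3 \<theta> x3 \<longrightarrow> cyc_order [x1,x2,x3])"
proof
  assume P: "Pf [m1,m2,m3] \<theta>"
  show "\<forall>x1 x2 x3. fib m1 \<theta> x1 \<and> fib m2 \<theta> x2 \<and> fib m3 \<theta> x3 \<longrightarrow> cyc_order [x1,x2,x3]"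
  proof (intro allI impI)
    fix x1 x2 x3 assume "fib m1 \<theta> x1 \<and> fib m2 \<theta> x2 \<and> fib m3 \<theta> x3"
    then have "\<forall>i<3. fib ([m1,m2,m3] ! i) \<theta> ([x1,x2,x3] ! i)" unfolding all3 by simp
    then show "cyc_order [x1,x2,x3]" using P unfolding Pf_def by simp
  qed
next
  assume P: "\<forall>x1 x2 x3. fib m1 \<theta> x1 \<and> fib m2 \<theta> x2 \<and> fib m3 \<theta> x3 \<longrightarrow> cyc_order [x1,x2,x3]"
  show "Pf [m1,m2,m3] \<theta>" unfolding Pf_def
  proof (intro allI impI)
    fix xs assume h: "length xs = length [m1,m2,m3] \<and> (\<forall>i<length [m1,m2,m3]. fib ([m1,m2,m3] ! i) \<theta> (xs ! i))"
    then have "length xs = 3" by simp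
    then obtain y1 y2 y3 where xs: "xs = [y1,y2,y3]" using len3_cases by blast
    have "\<forall>i<3. fib ([m1,m2,m3] ! i) \<theta> ([y1,y2,y3] ! i)" using h xs by simp
    then have "fib m1 \<theta> y1 \<and> fib m2 \<theta> y2 \<and> fib m3 \<theta> y3" unfolding all3 by simp
    then show "cyc_order xs" using P xs by blast
  qed
qed

lemma cmp_lift: "cmp m \<theta> \<Longrightarrow> 0 \<le> m + int N \<Longrightarrow> cmp (int (nat (m + int N))) (\<theta> + real N * \<omega>)"
  using cmp_shift[of m "int N" \<theta>] by simp

lemma Pf4_C:
  assumes d: "distinct [m1,m2,m3,m4]"
    and c: "cmp m1 \<theta>" "cmp m2 \<theta>" "cmp m3 \<theta>" "cmp m4 \<theta>"
    and N: "0 \<le> m1 + int N" "0 \<le> m2 + int N" "0 \<le> m3 + int N" "0 \<le> m4 + int N"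
  shows "Pf [m1,m2,m3,m4] \<theta> \<longleftrightarrow> cyc_order [Cpt (nat (m1 + int N)) (\<theta> + real N * \<omega>), Cpt (nat (m2 + int N)) (\<theta> + real N * \<omega>),
     Cpt (nat (m3 + int N)) (\<theta> + real N * \<omega>), Cpt (nat (m4 + int N)) (\<theta> + real N * \<omega>)]"
proof -
  have "Pf [m1,m2,m3,m4] \<theta> \<longleftrightarrow> Pf [m1 + int N, m2 + int N, m3 + int N, m4 + int N] (\<theta> + real N * \<omega>)"
    using P_shift[of "[m1,m2,m3,m4]" N \<theta>] N by simp
  also have "\<dots> \<longleftrightarrow> Pf [int (nat (m1 + int N)), int (nat (m2 + int N)), int (nat (m3 + int N)), int (nat (m4 + int N))] (\<theta> + real N * \<omega>)"
    using N by simp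
  also have "\<dots> \<longleftrightarrow> cyc_order [Cpt (nat (m1 + int N)) (\<theta> + real N * \<omega>), Cpt (nat (m2 + int N)) (\<theta> + real N * \<omega>),
     Cpt (nat (m3 + int N)) (\<theta> + real N * \<omega>), Cpt (nat (m4 + int N)) (\<theta> + real N * \<omega>)]"
    unfolding Pf4
  proof (rule P4_nonneg)
    show "distinct [nat (m1 + int N), nat (m2 + int N), nat (m3 + int N), nat (m4 + int N)]"
      using d N by (simp add: eq_nat_nat_iff)
  qed (use c N cmp_lift in auto)
  finally show ?thesis .
qed

lemma Pf3_C:
  assumes d: "distinct [m1,m2,m3]"
    and c: "cmp m1 \<theta>" "cmp m2 \<theta>" "cmp m3 \<theta>"
    and N: "0 \<le> m1 + int N" "0 \<le> m2 + int N" "0 \<le> m3 + int N"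
  shows "Pf [m1,m2,m3] \<theta> \<longleftrightarrow> cyc_order [Cpt (nat (m1 + int N)) (\<theta> + real N * \<omega>), Cpt (nat (m2 + int N)) (\<theta> + real N * \<omega>),
     Cpt (nat (m3 + int N)) (\<theta> + real N * \<omega>)]"
proof -
  have "Pf [m1,m2,m3] \<theta> \<longleftrightarrow> Pf [m1 + int N, m2 + int N, m3 + int N] (\<theta> + real N * \<omega>)"
    using P_shift[of "[m1,m2,m3]" N \<theta>] N by simp
  also have "\<dots> \<longleftrightarrow> Pf [int (nat (m1 + int N)), int (nat (m2 + int N)), int (nat (m3 + int N))] (\<theta> + real N * \<omega>)"
    using N by simp
  also have "\<dots> \<longleftrightarrow> cyc_order [Cpt (nat (m1 + int N)) (\<theta> + real N * \<omega>), Cpt (nat (m2 + int N)) (\<theta> + real N * \<omega>),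
     Cpt (nat (m3 + int N)) (\<theta> + real N * \<omega>)]"
    unfolding Pf3
  proof (rule P3_nonneg)
    show "distinct [nat (m1 + int N), nat (m2 + int N), nat (m3 + int N)]"
      using d N by (simp add: eq_nat_nat_iff)
  qed (use c N cmp_lift in auto)
  finally show ?thesis .
qed

lemma fib_nonempty: assumes "cmp m \<theta>" shows "\<exists>x. fib m \<theta> x"
proof -
  define N where "N = nat (- m)"
  have N: "0 \<le> m + int N" unfolding N_def by simp
  have "cmp (int (nat (m + int N))) (\<theta> + real N * \<omega>)" using cmp_lift[OF assms N] .
  then have f: "fib (int (nat (m + int N))) (\<theta> + real N * \<omega>) (Cpt (nat (m + int N)) (\<theta> + real N * \<omega>))" by (rule C_fib)
  obtain x where x: "G N \<theta> x = Cpt (nat (m + int N)) (\<theta> + real N * \<omega>)" using G_surj by blast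
  have "fib (m + int N) (\<theta> + real N * \<omega>) (G N \<theta> x)" using f x N by simp
  then show ?thesis using fib_shift[OF N] by blast
qed

lemma lhd4_distinct: assumes "lhd F \<omega> L a M [m1,m2,m3,m4] J" "\<theta> \<in> J" shows "distinct [m1,m2,m3,m4]"
proof -
  have c: "cmp m1 \<theta>" "cmp m2 \<theta>" "cmp m3 \<theta>" "cmp m4 \<theta>" and P: "Pf [m1,m2,m3,m4] \<theta>"
    using assms unfolding lhd_unfold by auto
  define pt where "pt m = (SOME x. fib m \<theta> x)" for m
  have pt: "fib m \<theta> (pt m)" if "cmp m \<theta>" for m unfolding pt_def using fib_nonempty[OF that] by (rule someI_ex)
  have "cyc_order [pt m1, pt m2, pt m3, pt m4]" using P pt c unfolding Pf4 by blast
  then have "distinct [pt m1, pt m2, pt m3, pt m4]" by (rule cyc4_distinct)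
  then show ?thesis by auto
qed

lemma lhd3_distinct: assumes "lhd F \<omega> L a M [m1,m2,m3] J" "\<theta> \<in> J" shows "distinct [m1,m2,m3]"
proof -
  have c: "cmp m1 \<theta>" "cmp m2 \<theta>" "cmp m3 \<theta>" and P: "Pf [m1,m2,m3] \<theta>"
    using assms unfolding lhd_unfold by auto
  define pt where "pt m = (SOME x. fib m \<theta> x)" for m
  have pt: "fib m \<theta> (pt m)" if "cmp m \<theta>" for m unfolding pt_def using fib_nonempty[OF that] by (rule someI_ex)
  have "cyc_order [pt m1, pt m2, pt m3]" using P pt c unfolding Pf3 by blast
  then have "distinct [pt m1, pt m2, pt m3]" by (rule cyc3_distinct)
  then show ?thesis by auto
qed

end

context skew begin

lemma delta_bound:
  assumes al: "0 < \<alpha>" "\<alpha> \<le> 1" and c: "\<forall>\<theta>\<in>Ialpha L \<alpha>. cmp m \<theta>"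
  shows "\<exists>\<delta> (i::int). of_int m * \<omega> = \<delta> + of_int i \<and> \<bar>\<delta>\<bar> \<le> (1 - \<alpha>) * L / 2"
proof -
  have aL: "0 < \<alpha> * L" using al L_pos by simp
  have "0 \<in> Ialpha L \<alpha>" unfolding Ialpha_def using aL by simp
  then obtain i :: int where i: "\<bar>0 - of_int m * \<omega> - of_int i\<bar> < L / 2" using c unfolding cmp_def by blast
  define \<delta> where "\<delta> = of_int m * \<omega> + of_int i"
  have eq: "of_int m * \<omega> = \<delta> + of_int (- i)" unfolding \<delta>_def by simp
  have dL: "\<bar>\<delta>\<bar> < L / 2" using i unfolding \<delta>_def by (smt (verit))
  have "\<bar>\<delta>\<bar> \<le> (1 - \<alpha>) * L / 2"
  proof (rule ccontr)
    assume "\<not> \<bar>\<delta>\<bar> \<le> (1 - \<alpha>) * L / 2"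
    then have big: "\<delta> > (1 - \<alpha>) * L / 2 \<or> \<delta> < - ((1 - \<alpha>) * L / 2)" by linarith
    have e1: "(1 - \<alpha>) * L / 2 = L / 2 - \<alpha> * L / 2" by (simp add: field_simps)
    show False
    proof (cases "\<delta> > (1 - \<alpha>) * L / 2")
      case True
      define \<theta> where "\<theta> = (- (\<alpha> * L / 2) + (\<delta> - L / 2)) / 2"
      have t1a: "- (\<alpha> * L / 2) < \<theta>" unfolding \<theta>_def using True by (simp add: field_simps)
      have t1b: "\<theta> < \<delta> - L / 2" unfolding \<theta>_def using True dL by (simp add: field_simps)
      note t1 = t1a t1b
      have "\<theta> \<in> Ialpha L \<alpha>" unfolding Ialpha_def using t1 dL aL by auto
      then obtain k :: int where k: "\<bar>\<theta> - of_int m * \<omega> - of_int k\<bar> < L / 2" using c unfolding cmp_def by blast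
      define z where "z = i - k"
      have E: "\<theta> - of_int m * \<omega> - of_int k = \<theta> - \<delta> + of_int z" unfolding z_def \<delta>_def by simp
      have kz: "\<bar>\<theta> - \<delta> + of_int z\<bar> < L / 2" using k unfolding E .
      have kz': "\<theta> - \<delta> + of_int z < L / 2 \<and> - (\<theta> - \<delta> + of_int z) < L / 2" using kz by (simp only: abs_less_iff)
      have dL': "\<delta> < L / 2 \<and> - \<delta> < L / 2" using dL by (simp only: abs_less_iff)
      have aLL: "\<alpha> * L \<le> L" using al L_pos by simp
      have "z = 0 \<or> z \<ge> 1 \<or> z \<le> -1" by linarith
      then show False
      proof (elim disjE)
        assume "z = 0"
        then have "\<bar>\<theta> - \<delta>\<bar> < L / 2" using kz by simp
        then have "\<theta> - \<delta> < L / 2 \<and> - (\<theta> - \<delta>) < L / 2" by (simp only: abs_less_iff)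
        then show False using t1 by linarith
      next
        assume "z \<ge> 1" then have "real_of_int z \<ge> 1" by simp
        then show False using kz' t1 dL' L_half aLL by linarith
      next
        assume "z \<le> -1" then have "real_of_int z \<le> -1" by simp
        then show False using kz' t1 dL' L_half aLL by linarith
      qed
    next
      case False
      then have F: "\<delta> < - ((1 - \<alpha>) * L / 2)" using big by simp
      define \<theta> where "\<theta> = (\<alpha> * L / 2 + (\<delta> + L / 2)) / 2"
      have t1a: "\<theta> < \<alpha> * L / 2" unfolding \<theta>_def using F dL by (simp add: field_simps)
      have t1b: "\<delta> + L / 2 < \<theta>" unfolding \<theta>_def using F dL by (simp add: field_simps)
      note t1 = t1a t1b
      have "\<theta> \<in> Ialpha L \<alpha>" unfolding Ialpha_def using t1 dL aL by auto
      then obtain k :: int where k: "\<bar>\<theta> - of_int m * \<omega> - of_int k\<bar> < L / 2" using c unfolding cmp_def by blast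
      define z where "z = i - k"
      have E: "\<theta> - of_int m * \<omega> - of_int k = \<theta> - \<delta> + of_int z" unfolding z_def \<delta>_def by simp
      have kz: "\<bar>\<theta> - \<delta> + of_int z\<bar> < L / 2" using k unfolding E .
      have kz': "\<theta> - \<delta> + of_int z < L / 2 \<and> - (\<theta> - \<delta> + of_int z) < L / 2" using kz by (simp only: abs_less_iff)
      have dL': "\<delta> < L / 2 \<and> - \<delta> < L / 2" using dL by (simp only: abs_less_iff)
      have aLL: "\<alpha> * L \<le> L" using al L_pos by simp
      have "z = 0 \<or> z \<ge> 1 \<or> z \<le> -1" by linarith
      then show False
      proof (elim disjE)
        assume "z = 0"
        then have "\<bar>\<theta> - \<delta>\<bar> < L / 2" using kz by simp
        then have "\<theta> - \<delta> < L / 2 \<and> - (\<theta> - \<delta>) < L / 2" by (simp only: abs_less_iff)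
        then show False using t1 by linarith
      next
        assume "z \<ge> 1" then have "real_of_int z \<ge> 1" by simp
        then show False using kz' t1 dL' L_half aLL by linarith
      next
        assume "z \<le> -1" then have "real_of_int z \<le> -1" by simp
        then show False using kz' t1 dL' L_half aLL by linarith
      qed
    qed
  qed
  then show ?thesis using eq by blast
qed

lemma cmp_neg: assumes "\<forall>\<theta>\<in>Ialpha L \<alpha>. cmp m \<theta>" shows "\<forall>\<theta>\<in>Ialpha L \<alpha>. cmp (- m) \<theta>"
proof
  fix \<theta> assume "\<theta> \<in> Ialpha L \<alpha>"
  then have "- \<theta> \<in> Ialpha L \<alpha>" unfolding Ialpha_def by auto
  then obtain i :: int where i: "\<bar>- \<theta> - of_int m * \<omega> - of_int i\<bar> < L / 2" using assms unfolding cmp_def by blast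
  have "\<bar>\<theta> - of_int (- m) * \<omega> - of_int (- i)\<bar> = \<bar>- \<theta> - of_int m * \<omega> - of_int i\<bar>" by (simp add: abs_minus_commute algebra_simps)
  then show "cmp (- m) \<theta>" using i unfolding cmp_def by metis
qed

lemma cmp_zero: assumes "0 < \<alpha>" "\<alpha> \<le> 1" "\<theta> \<in> Ialpha L \<alpha>" shows "cmp 0 \<theta>"
proof -
  have "\<alpha> * L \<le> L" using assms L_pos by simp
  then have "\<bar>\<theta>\<bar> < L / 2" using assms(3) unfolding Ialpha_def by auto
  then show ?thesis unfolding cmp_def by (intro exI[of _ 0]) simp
qed

lemma Da:
  fixes N :: nat and m i :: int and \<theta> \<delta> :: real
  assumes m0: "m \<noteq> 0" and mN: "\<bar>m\<bar> \<le> int N" and eq: "of_int m * \<omega> = \<delta> + of_int i"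
    and bd: "\<bar>\<theta>\<bar> + \<bar>\<delta>\<bar> < L / 2"
  shows "Dm (nat (int N - m)) N (\<theta> + real N * \<omega>) = Dm N (nat (int N + m)) (\<theta> + real N * \<omega>)"
proof -
  define u where "u = nat (int N - m)"
  define w where "w = nat (int N + m)"
  define t where "t = \<theta> + real N * \<omega>"
  have iu: "int u = int N - m" unfolding u_def using mN by simp
  have ru: "of_int (int u) * \<omega> = real N * \<omega> - of_int m * \<omega>" using iu by (simp add: left_diff_distrib)
  have uN: "u \<noteq> N" using iu m0 by auto
  have th_bd: "\<bar>\<theta>\<bar> < L / 2" using bd by simp
  have c1: "cmp (int u) (t - of_int m * \<omega>)"
  proof (rule cmp_intro[where i=0])
    have "t - of_int m * \<omega> - of_int (int u) * \<omega> - of_int 0 = \<theta>" unfolding t_def ru by simp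
    then show "\<bar>t - of_int m * \<omega> - of_int (int u) * \<omega> - of_int 0\<bar> < L / 2" using th_bd by simp
  qed
  have c2: "cmp (int N) (t - of_int m * \<omega>)"
  proof (rule cmp_intro[where i="- i"])
    have "t - of_int m * \<omega> - of_int (int N) * \<omega> - of_int (- i) = \<theta> - \<delta>" unfolding t_def using eq by simp
    moreover have "\<bar>\<theta> - \<delta>\<bar> < L / 2" using bd by linarith
    ultimately show "\<bar>t - of_int m * \<omega> - of_int (int N) * \<omega> - of_int (- i)\<bar> < L / 2" by simp
  qed
  have "Dm (nat (int u + m)) (nat (int N + m)) (t - of_int m * \<omega> + of_int m * \<omega>) = Dm u N (t - of_int m * \<omega>)"
    by (rule Dm_shift_int[OF uN c1 c2]) (use iu mN in auto)
  moreover have "nat (int u + m) = N" using iu by simp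
  ultimately have s1: "Dm N w t = Dm u N (t - of_int m * \<omega>)" unfolding w_def by simp
  have e: "t - of_int m * \<omega> = (t - \<delta>) + of_int (- i)" using eq by simp
  have s2: "Dm u N (t - of_int m * \<omega>) = Dm u N (t - \<delta>)" unfolding e by (rule Dm_per)
  have s3: "Dm u N t = Dm u N (t - \<delta>)"
  proof (rule Dm_const[OF uN])
    fix l :: real assume l: "0 \<le> l" "l \<le> 1"
    have tl: "t + l * (t - \<delta> - t) = t - l * \<delta>" by (simp add: algebra_simps)
    have b1: "\<bar>\<delta> - l * \<delta>\<bar> \<le> \<bar>\<delta>\<bar>"
    proof -
      have "\<delta> - l * \<delta> = (1 - l) * \<delta>" by (simp add: algebra_simps)
      then show ?thesis using abs_scale[of \<delta> "\<bar>\<delta>\<bar>" "1 - l"] l by simp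
    qed
    have b2: "\<bar>l * \<delta>\<bar> \<le> \<bar>\<delta>\<bar>" using abs_scale[of \<delta> "\<bar>\<delta>\<bar>" l] l by simp
    have "cmp (int u) (t - l * \<delta>)"
    proof (rule cmp_intro[where i=i])
      have E: "t - l * \<delta> - of_int (int u) * \<omega> - of_int i = \<theta> + (\<delta> - l * \<delta>)" using ru eq unfolding t_def by linarith
      have "\<bar>\<theta> + (\<delta> - l * \<delta>)\<bar> < L / 2" using b1 bd by linarith
      then show "\<bar>t - l * \<delta> - of_int (int u) * \<omega> - of_int i\<bar> < L / 2" unfolding E .
    qed
    moreover have "cmp (int N) (t - l * \<delta>)"
    proof (rule cmp_intro[where i=0])
      have E: "t - l * \<delta> - of_int (int N) * \<omega> - of_int 0 = \<theta> - l * \<delta>" unfolding t_def by simp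
      have "\<bar>\<theta> - l * \<delta>\<bar> < L / 2" using b2 bd by linarith
      then show "\<bar>t - l * \<delta> - of_int (int N) * \<omega> - of_int 0\<bar> < L / 2" unfolding E .
    qed
    ultimately show "cmp (int u) (t + l * (t - \<delta> - t)) \<and> cmp (int N) (t + l * (t - \<delta> - t))" unfolding tl by simp
  qed
  show ?thesis using s1 s2 s3 unfolding u_def[symmetric] w_def[symmetric] t_def[symmetric] by simp
qed

end

context skew begin

lemma Db:
  fixes N :: nat and n k jn ik :: int and \<theta> \<delta>n \<delta>k B :: real
  assumes nk: "n \<noteq> k" and nN: "\<bar>n\<bar> \<le> int N" and kN: "\<bar>k\<bar> \<le> int N"
    and en: "of_int n * \<omega> = \<delta>n + of_int jn" and ek: "of_int k * \<omega> = \<delta>k + of_int ik"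
    and bn: "\<bar>\<delta>n\<bar> \<le> B" and bk: "\<bar>\<delta>k\<bar> \<le> B" and bd: "\<bar>\<theta>\<bar> + B < L / 2"
  shows "Dm (nat (int N - n)) (nat (int N - k)) (\<theta> + real N * \<omega>) = Dm (nat (int N + k)) (nat (int N + n)) (\<theta> + real N * \<omega>)"
proof -
  define p where "p = nat (int N - n)"
  define q where "q = nat (int N - k)"
  define K where "K = nat (int N + k)"
  define Nn where "Nn = nat (int N + n)"
  define t where "t = \<theta> + real N * \<omega>"
  have ip: "int p = int N - n" unfolding p_def using nN by simp
  have iq: "int q = int N - k" unfolding q_def using kN by simp
  have iK: "int K = int N + k" unfolding K_def using kN by simp
  have iNn: "int Nn = int N + n" unfolding Nn_def using nN by simp
  have rp: "of_int (int p) * \<omega> = real N * \<omega> - of_int n * \<omega>" using ip by (simp add: left_diff_distrib)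
  have rq: "of_int (int q) * \<omega> = real N * \<omega> - of_int k * \<omega>" using iq by (simp add: left_diff_distrib)
  have rK: "of_int (int K) * \<omega> = real N * \<omega> + of_int k * \<omega>" using iK by (simp add: distrib_right)
  have rNn: "of_int (int Nn) * \<omega> = real N * \<omega> + of_int n * \<omega>" using iNn by (simp add: distrib_right)
  have pq: "p \<noteq> q" using ip iq nk by auto
  have KN: "K \<noteq> Nn" using iK iNn nk by auto
  have cp: "cmp (int p) t"
  proof (rule cmp_intro[where i="jn"])
    have E: "t - of_int (int p) * \<omega> - of_int jn = \<theta> + \<delta>n" using rp en unfolding t_def by linarith
    have "\<bar>\<theta> + \<delta>n\<bar> < L / 2" using bd bn abs_triangle_ineq[of \<theta> \<delta>n] by linarith
    then show "\<bar>t - of_int (int p) * \<omega> - of_int jn\<bar> < L / 2" unfolding E .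
  qed
  have cq: "cmp (int q) t"
  proof (rule cmp_intro[where i="ik"])
    have E: "t - of_int (int q) * \<omega> - of_int ik = \<theta> + \<delta>k" using rq ek unfolding t_def by linarith
    have "\<bar>\<theta> + \<delta>k\<bar> < L / 2" using bd bk abs_triangle_ineq[of \<theta> \<delta>k] by linarith
    then show "\<bar>t - of_int (int q) * \<omega> - of_int ik\<bar> < L / 2" unfolding E .
  qed
  have "Dm (nat (int p + (n + k))) (nat (int q + (n + k))) (t + of_int (n + k) * \<omega>) = Dm p q t"
    by (rule Dm_shift_int[OF pq cp cq]) (use ip iq nN kN in auto)
  moreover have "nat (int p + (n + k)) = K" "nat (int q + (n + k)) = Nn" using ip iq iK iNn by auto
  ultimately have s1: "Dm K Nn (t + of_int (n + k) * \<omega>) = Dm p q t" by simp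
  have e: "t + of_int (n + k) * \<omega> = (t + \<delta>n + \<delta>k) + of_int (jn + ik)" using en ek by (simp add: distrib_right)
  have s2: "Dm K Nn (t + of_int (n + k) * \<omega>) = Dm K Nn (t + \<delta>n + \<delta>k)" unfolding e by (rule Dm_per)
  have s3: "Dm K Nn t = Dm K Nn (t + \<delta>n + \<delta>k)"
  proof (rule Dm_const[OF KN])
    fix l :: real assume l: "0 \<le> l" "l \<le> 1"
    have tl: "t + l * (t + \<delta>n + \<delta>k - t) = t + l * \<delta>n + l * \<delta>k" by (simp add: algebra_simps)
    have i1: "l * \<delta>n + l * \<delta>k - \<delta>k = l * \<delta>n - (1 - l) * \<delta>k" by (simp add: algebra_simps)
    have i2: "l * \<delta>n + l * \<delta>k - \<delta>n = l * \<delta>k - (1 - l) * \<delta>n" by (simp add: algebra_simps)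
    have b1: "\<bar>l * \<delta>n - (1 - l) * \<delta>k\<bar> \<le> B" using abs_comb[OF bn bk l] .
    have b2: "\<bar>l * \<delta>k - (1 - l) * \<delta>n\<bar> \<le> B" using abs_comb[OF bk bn l] .
    have "cmp (int K) (t + l * \<delta>n + l * \<delta>k)"
    proof (rule cmp_intro[where i="- ik"])
      have E: "t + l * \<delta>n + l * \<delta>k - of_int (int K) * \<omega> - of_int (- ik) = \<theta> + (l * \<delta>n + l * \<delta>k - \<delta>k)"
        using rK ek unfolding t_def by simp
      have "\<bar>\<theta> + (l * \<delta>n + l * \<delta>k - \<delta>k)\<bar> < L / 2"
        using b1 bd abs_triangle_ineq[of \<theta> "l * \<delta>n - (1 - l) * \<delta>k"] unfolding i1 by linarith
      then show "\<bar>t + l * \<delta>n + l * \<delta>k - of_int (int K) * \<omega> - of_int (- ik)\<bar> < L / 2" unfolding E .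
    qed
    moreover have "cmp (int Nn) (t + l * \<delta>n + l * \<delta>k)"
    proof (rule cmp_intro[where i="- jn"])
      have E: "t + l * \<delta>n + l * \<delta>k - of_int (int Nn) * \<omega> - of_int (- jn) = \<theta> + (l * \<delta>n + l * \<delta>k - \<delta>n)"
        using rNn en unfolding t_def by simp
      have "\<bar>\<theta> + (l * \<delta>n + l * \<delta>k - \<delta>n)\<bar> < L / 2"
        using b2 bd abs_triangle_ineq[of \<theta> "l * \<delta>k - (1 - l) * \<delta>n"] unfolding i2 by linarith
      then show "\<bar>t + l * \<delta>n + l * \<delta>k - of_int (int Nn) * \<omega> - of_int (- jn)\<bar> < L / 2" unfolding E .
    qed
    ultimately show "cmp (int K) (t + l * (t + \<delta>n + \<delta>k - t)) \<and> cmp (int Nn) (t + l * (t + \<delta>n + \<delta>k - t))"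
      unfolding tl by simp
  qed
  show ?thesis using s1 s2 s3 unfolding p_def[symmetric] q_def[symmetric] K_def[symmetric] Nn_def[symmetric] t_def[symmetric] by simp
qed

end

context skew begin

lemma theta_bound:
  assumes al: "0 < \<alpha>" "\<alpha> \<le> 1" and th: "\<theta> \<in> Ialpha L \<alpha>"
  shows "\<bar>\<theta>\<bar> + (1 - \<alpha>) * L / 2 < L / 2"
proof -
  have e1: "(1 - \<alpha>) * L / 2 = L / 2 - \<alpha> * L / 2" by (simp add: field_simps)
  have "\<bar>\<theta>\<bar> < \<alpha> * L / 2" using th unfolding Ialpha_def by auto
  then show ?thesis using e1 by linarith
qed

lemma main4:
  assumes al: "0 < \<alpha>" "\<alpha> \<le> 1" and cn: "\<forall>\<theta>\<in>Ialpha L \<alpha>. cmp n \<theta>" and ck: "\<forall>\<theta>\<in>Ialpha L \<alpha>. cmp k \<theta>"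
    and d: "distinct [-n, 0, k, n]"
  shows "lhd F \<omega> L a M [-n, 0, k, n] (Ialpha L \<alpha>) \<longleftrightarrow> lhd F \<omega> L a M [-n, -k, 0, n] (Ialpha L \<alpha>)"
proof -
  obtain \<delta>n jn where en: "of_int n * \<omega> = \<delta>n + of_int jn" and bn: "\<bar>\<delta>n\<bar> \<le> (1 - \<alpha>) * L / 2"
    using delta_bound[OF al cn] by blast
  obtain \<delta>k jk where ek: "of_int k * \<omega> = \<delta>k + of_int jk" and bk: "\<bar>\<delta>k\<bar> \<le> (1 - \<alpha>) * L / 2"
    using delta_bound[OF al ck] by blast
  have cmn: "\<forall>\<theta>\<in>Ialpha L \<alpha>. cmp (- n) \<theta>" using cmp_neg[OF cn] .
  have cmk: "\<forall>\<theta>\<in>Ialpha L \<alpha>. cmp (- k) \<theta>" using cmp_neg[OF ck] .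
  have c0: "\<forall>\<theta>\<in>Ialpha L \<alpha>. cmp 0 \<theta>" using cmp_zero[OF al] by blast
  have n0: "n \<noteq> 0" and k0: "k \<noteq> 0" and nk: "n \<noteq> k" and nk': "k \<noteq> - n" using d by auto
  have d2: "distinct [-n, -k, 0, n]" using n0 k0 nk nk' by auto
  have P: "Pf [-n, 0, k, n] \<theta> \<longleftrightarrow> Pf [-n, -k, 0, n] \<theta>" if th: "\<theta> \<in> Ialpha L \<alpha>" for \<theta>
  proof -
    define N where "N = nat \<bar>n\<bar> + nat \<bar>k\<bar>"
    have nN: "\<bar>n\<bar> \<le> int N" and kN: "\<bar>k\<bar> \<le> int N" unfolding N_def by auto
    have bd: "\<bar>\<theta>\<bar> + (1 - \<alpha>) * L / 2 < L / 2" by (rule theta_bound[OF al th])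
    define t where "t = \<theta> + real N * \<omega>"
    define A where "A = nat (int N - n)"
    define Bk where "Bk = nat (int N - k)"
    define K where "K = nat (int N + k)"
    define Nn where "Nn = nat (int N + n)"
    have eqs: "nat (- n + int N) = A" "nat (- k + int N) = Bk" "nat (k + int N) = K" "nat (n + int N) = Nn" "nat (0 + int N) = N"
      unfolding A_def Bk_def K_def Nn_def by (simp_all add: add.commute)
    have ge: "0 \<le> - n + int N" "0 \<le> - k + int N" "0 \<le> k + int N" "0 \<le> n + int N" "0 \<le> 0 + int N" using nN kN by auto
    have cth: "cmp (- n) \<theta>" "cmp (- k) \<theta>" "cmp k \<theta>" "cmp n \<theta>" "cmp 0 \<theta>" using cn ck cmn cmk c0 th by auto
    have ct: "cmp (int A) t" "cmp (int Bk) t" "cmp (int K) t" "cmp (int Nn) t" "cmp (int N) t"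
      using cmp_lift[OF cth(1) ge(1)] cmp_lift[OF cth(2) ge(2)] cmp_lift[OF cth(3) ge(3)] cmp_lift[OF cth(4) ge(4)]
        cmp_lift[OF cth(5) ge(5)] unfolding eqs t_def by simp_all
    have iA: "int A = int N - n" and iBk: "int Bk = int N - k" and iK: "int K = int N + k" and iNn: "int Nn = int N + n"
      unfolding A_def Bk_def K_def Nn_def using nN kN by auto
    have dn: "distinct [N, K, Nn, A]" "distinct [N, Nn, A, Bk]" using iA iBk iK iNn n0 k0 nk nk' by auto
    have L: "Pf [-n, 0, k, n] \<theta> \<longleftrightarrow> cyc_order [Cpt A t, Cpt N t, Cpt K t, Cpt Nn t]"
      using Pf4_C[OF d cth(1) cth(5) cth(3) cth(4) ge(1) ge(5) ge(3) ge(4)] unfolding eqs t_def .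
    have R: "Pf [-n, -k, 0, n] \<theta> \<longleftrightarrow> cyc_order [Cpt A t, Cpt Bk t, Cpt N t, Cpt Nn t]"
      using Pf4_C[OF d2 cth(1) cth(2) cth(5) cth(4) ge(1) ge(2) ge(5) ge(4)] unfolding eqs t_def .
    have L': "cyc_order [Cpt A t, Cpt N t, Cpt K t, Cpt Nn t] \<longleftrightarrow>
        Dm N Nn t - Dm N K t \<le> Dm K Nn t \<and> Dm N A t - Dm N Nn t \<le> Dm Nn A t"
      using cyc4_rot[of "Cpt A t" "Cpt N t" "Cpt K t" "Cpt Nn t"]
        cyc4_E[OF dn(1) ct(5) ct(3) ct(4) ct(1) C_inE C_inE C_inE C_inE] by simp
    have R': "cyc_order [Cpt A t, Cpt Bk t, Cpt N t, Cpt Nn t] \<longleftrightarrow>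
        Dm N A t - Dm N Nn t \<le> Dm Nn A t \<and> Dm N Bk t - Dm N A t \<le> Dm A Bk t"
      using cyc4_rot[of "Cpt A t" "Cpt Bk t" "Cpt N t" "Cpt Nn t"] cyc4_rot[of "Cpt Bk t" "Cpt N t" "Cpt Nn t" "Cpt A t"]
        cyc4_E[OF dn(2) ct(5) ct(4) ct(1) ct(2) C_inE C_inE C_inE C_inE] by simp
    have f1: "Dm A N t = Dm N Nn t" unfolding A_def Nn_def t_def
      by (rule Da[OF n0 nN en]) (use bd bn in linarith)
    have f2: "Dm Bk N t = Dm N K t" unfolding Bk_def K_def t_def
      by (rule Da[OF k0 kN ek]) (use bd bk in linarith)
    have f3: "Dm N A t = - Dm A N t - 1" using Dm_antisym[of A N t] ct iA n0 by auto
    have f4: "Dm N Bk t = - Dm Bk N t - 1" using Dm_antisym[of Bk N t] ct iBk k0 by auto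
    have f5: "Dm A Bk t = Dm K Nn t" unfolding A_def Bk_def K_def Nn_def t_def
      by (rule Db[OF nk nN kN en ek bn bk bd])
    have X: "(Dm N Nn t - Dm N K t \<le> Dm K Nn t) \<longleftrightarrow> (Dm N Bk t - Dm N A t \<le> Dm A Bk t)"
      unfolding f3 f4 f5 f1 f2 by linarith
    show ?thesis unfolding L R L' R' using X by blast
  qed
  show ?thesis unfolding lhd_unfold using P cn ck cmn cmk c0 by auto
qed

lemma main3:
  assumes al: "0 < \<alpha>" "\<alpha> \<le> 1" and cn: "\<forall>\<theta>\<in>Ialpha L \<alpha>. cmp n \<theta>" and ck: "\<forall>\<theta>\<in>Ialpha L \<alpha>. cmp k \<theta>"
    and d: "distinct [0, k, n]"
  shows "lhd F \<omega> L a M [0, k, n] (Ialpha L \<alpha>) \<longleftrightarrow> lhd F \<omega> L a M [-n, -k, 0] (Ialpha L \<alpha>)"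
proof -
  obtain \<delta>n jn where en: "of_int n * \<omega> = \<delta>n + of_int jn" and bn: "\<bar>\<delta>n\<bar> \<le> (1 - \<alpha>) * L / 2"
    using delta_bound[OF al cn] by blast
  obtain \<delta>k jk where ek: "of_int k * \<omega> = \<delta>k + of_int jk" and bk: "\<bar>\<delta>k\<bar> \<le> (1 - \<alpha>) * L / 2"
    using delta_bound[OF al ck] by blast
  have cmn: "\<forall>\<theta>\<in>Ialpha L \<alpha>. cmp (- n) \<theta>" using cmp_neg[OF cn] .
  have cmk: "\<forall>\<theta>\<in>Ialpha L \<alpha>. cmp (- k) \<theta>" using cmp_neg[OF ck] .
  have c0: "\<forall>\<theta>\<in>Ialpha L \<alpha>. cmp 0 \<theta>" using cmp_zero[OF al] by blast
  have n0: "n \<noteq> 0" and k0: "k \<noteq> 0" and nk: "n \<noteq> k" using d by auto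
  have d2: "distinct [-n, -k, 0]" using n0 k0 nk by auto
  have P: "Pf [0, k, n] \<theta> \<longleftrightarrow> Pf [-n, -k, 0] \<theta>" if th: "\<theta> \<in> Ialpha L \<alpha>" for \<theta>
  proof -
    define N where "N = nat \<bar>n\<bar> + nat \<bar>k\<bar>"
    have nN: "\<bar>n\<bar> \<le> int N" and kN: "\<bar>k\<bar> \<le> int N" unfolding N_def by auto
    have bd: "\<bar>\<theta>\<bar> + (1 - \<alpha>) * L / 2 < L / 2" by (rule theta_bound[OF al th])
    define t where "t = \<theta> + real N * \<omega>"
    define A where "A = nat (int N - n)"
    define Bk where "Bk = nat (int N - k)"
    define K where "K = nat (int N + k)"
    define Nn where "Nn = nat (int N + n)"
    have eqs: "nat (- n + int N) = A" "nat (- k + int N) = Bk" "nat (k + int N) = K" "nat (n + int N) = Nn" "nat (0 + int N) = N"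
      unfolding A_def Bk_def K_def Nn_def by (simp_all add: add.commute)
    have ge: "0 \<le> - n + int N" "0 \<le> - k + int N" "0 \<le> k + int N" "0 \<le> n + int N" "0 \<le> 0 + int N" using nN kN by auto
    have cth: "cmp (- n) \<theta>" "cmp (- k) \<theta>" "cmp k \<theta>" "cmp n \<theta>" "cmp 0 \<theta>" using cn ck cmn cmk c0 th by auto
    have ct: "cmp (int A) t" "cmp (int Bk) t" "cmp (int K) t" "cmp (int Nn) t" "cmp (int N) t"
      using cmp_lift[OF cth(1) ge(1)] cmp_lift[OF cth(2) ge(2)] cmp_lift[OF cth(3) ge(3)] cmp_lift[OF cth(4) ge(4)]
        cmp_lift[OF cth(5) ge(5)] unfolding eqs t_def by simp_all
    have iA: "int A = int N - n" and iBk: "int Bk = int N - k" and iK: "int K = int N + k" and iNn: "int Nn = int N + n"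
      unfolding A_def Bk_def K_def Nn_def using nN kN by auto
    have dn: "distinct [N, K, Nn]" "distinct [N, A, Bk]" using iA iBk iK iNn n0 k0 nk by auto
    have L: "Pf [0, k, n] \<theta> \<longleftrightarrow> cyc_order [Cpt N t, Cpt K t, Cpt Nn t]"
      using Pf3_C[OF d cth(5) cth(3) cth(4) ge(5) ge(3) ge(4)] unfolding eqs t_def .
    have R: "Pf [-n, -k, 0] \<theta> \<longleftrightarrow> cyc_order [Cpt A t, Cpt Bk t, Cpt N t]"
      using Pf3_C[OF d2 cth(1) cth(2) cth(5) ge(1) ge(2) ge(5)] unfolding eqs t_def .
    have L': "cyc_order [Cpt N t, Cpt K t, Cpt Nn t] \<longleftrightarrow> Dm N Nn t - Dm N K t \<le> Dm K Nn t"
      using cyc3_E[OF dn(1) ct(5) ct(3) ct(4) C_inE C_inE C_inE] by simp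
    have R': "cyc_order [Cpt A t, Cpt Bk t, Cpt N t] \<longleftrightarrow> Dm N Bk t - Dm N A t \<le> Dm A Bk t"
      using cyc3_rot[of "Cpt A t" "Cpt Bk t" "Cpt N t"] cyc3_rot[of "Cpt Bk t" "Cpt N t" "Cpt A t"]
        cyc3_E[OF dn(2) ct(5) ct(1) ct(2) C_inE C_inE C_inE] by simp
    have f1: "Dm A N t = Dm N Nn t" unfolding A_def Nn_def t_def
      by (rule Da[OF n0 nN en]) (use bd bn in linarith)
    have f2: "Dm Bk N t = Dm N K t" unfolding Bk_def K_def t_def
      by (rule Da[OF k0 kN ek]) (use bd bk in linarith)
    have f3: "Dm N A t = - Dm A N t - 1" using Dm_antisym[of A N t] ct iA n0 by auto
    have f4: "Dm N Bk t = - Dm Bk N t - 1" using Dm_antisym[of Bk N t] ct iBk k0 by auto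
    have f5: "Dm A Bk t = Dm K Nn t" unfolding A_def Bk_def K_def Nn_def t_def
      by (rule Db[OF nk nN kN en ek bn bk bd])
    have X: "(Dm N Nn t - Dm N K t \<le> Dm K Nn t) \<longleftrightarrow> (Dm N Bk t - Dm N A t \<le> Dm A Bk t)"
      unfolding f3 f4 f5 f1 f2 by linarith
    show ?thesis unfolding L R L' R' using X by blast
  qed
  show ?thesis unfolding lhd_unfold using P cn ck cmn cmk c0 by auto
qed

end

theorem mainTheorem7:
  fixes F :: "real \<Rightarrow> real \<Rightarrow> real" and \<omega> L a M \<alpha> :: real
  assumes omega: "0 \<le> \<omega>" "\<omega> < 1" "\<omega> \<notin> \<rat>"
    and F_cont: "continuous_on UNIV (\<lambda>p. F (fst p) (snd p))"
    and F_per: "\<And>\<theta> x. F (\<theta> + 1) x = F \<theta> x"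
    and F_deg: "\<And>\<theta> x. F \<theta> (x + 1) = F \<theta> x + 1"
    and F_mono: "\<And>\<theta>. strict_mono (F \<theta>)"
    and I_len: "0 < L" "L < 1 / 2"
    and K_len: "0 < M" "M \<le> 1"
    and wandering: "\<And>n::nat. 1 \<le> n \<Longrightarrow> \<not> (\<exists>\<theta> x. inW L a M \<theta> x \<and> inTW F \<omega> L a M (int n) \<theta> x)"
    and alpha: "0 < \<alpha>" "\<alpha> \<le> 1"
  shows "(\<forall>n k::int.
            lhd F \<omega> L a M [-n, 0, k, n] (Ialpha L \<alpha>) \<longleftrightarrow> lhd F \<omega> L a M [-n, -k, 0, n] (Ialpha L \<alpha>))
         \<and> (\<forall>n::int. closest_return F \<omega> L a M \<alpha> n \<longrightarrow> closest_return F \<omega> L a M \<alpha> (-n))"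
proof -
  interpret skew F \<omega> L a M
    by unfold_locales (use F_cont F_per F_deg F_mono I_len K_len wandering in auto)
  define J where "J = Ialpha L \<alpha>"
  have Nset_iff: "m \<in> Nset \<omega> L \<alpha> \<longleftrightarrow> (\<forall>\<theta>\<in>J. cmp m \<theta>)" for m
    unfolding Nset_def comparable_def cmp_def J_def by simp
  have z: "0 \<in> J" unfolding J_def Ialpha_def using alpha I_len by simp
  have P4: "lhd F \<omega> L a M [-n, 0, k, n] J \<longleftrightarrow> lhd F \<omega> L a M [-n, -k, 0, n] J" for n k
  proof (cases "lhd F \<omega> L a M [-n, 0, k, n] J \<or> lhd F \<omega> L a M [-n, -k, 0, n] J")
    case True
    then have "(\<forall>\<theta>\<in>J. cmp n \<theta>) \<and> (\<forall>\<theta>\<in>J. cmp k \<theta>) \<and> distinct [-n, 0, k, n]"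
    proof
      assume h: "lhd F \<omega> L a M [-n, 0, k, n] J"
      have "\<forall>\<theta>\<in>J. \<forall>m\<in>set [-n, 0, k, n]. cmp m \<theta>" using h unfolding lhd_unfold by blast
      moreover have "distinct [-n, 0, k, n]" using lhd4_distinct[OF h z] .
      ultimately show ?thesis by auto
    next
      assume h: "lhd F \<omega> L a M [-n, -k, 0, n] J"
      have c: "\<forall>\<theta>\<in>J. \<forall>m\<in>set [-n, -k, 0, n]. cmp m \<theta>" using h unfolding lhd_unfold by blast
      then have "\<forall>\<theta>\<in>J. cmp (-k) \<theta>" by auto
      then have "\<forall>\<theta>\<in>J. cmp k \<theta>" using cmp_neg[of \<alpha> "-k"] unfolding J_def by simp
      moreover have "\<forall>\<theta>\<in>J. cmp n \<theta>" using c by auto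
      moreover have "distinct [-n, -k, 0, n]" using lhd4_distinct[OF h z] .
      then have "distinct [-n, 0, k, n]" by auto
      ultimately show ?thesis by auto
    qed
    then show ?thesis using main4[OF alpha] unfolding J_def by blast
  next
    case False then show ?thesis by blast
  qed
  have P3: "lhd F \<omega> L a M [0, k, n] J \<longleftrightarrow> lhd F \<omega> L a M [-n, -k, 0] J" for n k
  proof (cases "lhd F \<omega> L a M [0, k, n] J \<or> lhd F \<omega> L a M [-n, -k, 0] J")
    case True
    then have "(\<forall>\<theta>\<in>J. cmp n \<theta>) \<and> (\<forall>\<theta>\<in>J. cmp k \<theta>) \<and> distinct [0, k, n]"
    proof
      assume h: "lhd F \<omega> L a M [0, k, n] J"
      have "\<forall>\<theta>\<in>J. \<forall>m\<in>set [0, k, n]. cmp m \<theta>" using h unfolding lhd_unfold by blast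
      moreover have "distinct [0, k, n]" using lhd3_distinct[OF h z] .
      ultimately show ?thesis by auto
    next
      assume h: "lhd F \<omega> L a M [-n, -k, 0] J"
      have c: "\<forall>\<theta>\<in>J. \<forall>m\<in>set [-n, -k, 0]. cmp m \<theta>" using h unfolding lhd_unfold by blast
      then have "\<forall>\<theta>\<in>J. cmp (-k) \<theta>" "\<forall>\<theta>\<in>J. cmp (-n) \<theta>" by auto
      then have "\<forall>\<theta>\<in>J. cmp k \<theta>" "\<forall>\<theta>\<in>J. cmp n \<theta>"
        using cmp_neg[of \<alpha> "-k"] cmp_neg[of \<alpha> "-n"] unfolding J_def by simp_all
      moreover have "distinct [-n, -k, 0]" using lhd3_distinct[OF h z] .
      then have "distinct [0, k, n]" by auto
      ultimately show ?thesis by auto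
    qed
    then show ?thesis using main3[OF alpha] unfolding J_def by blast
  next
    case False then show ?thesis by blast
  qed
  have CR: "closest_return F \<omega> L a M \<alpha> (-n)" if cr: "closest_return F \<omega> L a M \<alpha> n" for n
  proof -
    have nN: "n \<in> Nset \<omega> L \<alpha>" using cr unfolding closest_return_def by blast
    have disj: "(lhd F \<omega> L a M [-n, 0, n] J \<and>
        \<not> (\<exists>k \<in> Nset \<omega> L \<alpha> - {0}. \<bar>k\<bar> < \<bar>n\<bar> \<and> lhd F \<omega> L a M [0, k, n] J))
      \<or> (lhd F \<omega> L a M [n, 0, -n] J \<and>
        \<not> (\<exists>k \<in> Nset \<omega> L \<alpha> - {0}. \<bar>k\<bar> < \<bar>n\<bar> \<and> lhd F \<omega> L a M [n, k, 0] J))"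
      using cr unfolding closest_return_def J_def by blast
    have mN: "-n \<in> Nset \<omega> L \<alpha>" using nN cmp_neg[of \<alpha> n] unfolding Nset_iff J_def by blast
    have negN: "-k \<in> Nset \<omega> L \<alpha> - {0}" if "k \<in> Nset \<omega> L \<alpha> - {0}" for k
      using that cmp_neg[of \<alpha> k] by (auto simp: Nset_iff J_def)
    from disj show ?thesis
    proof
      assume A: "lhd F \<omega> L a M [-n, 0, n] J \<and>
        \<not> (\<exists>k \<in> Nset \<omega> L \<alpha> - {0}. \<bar>k\<bar> < \<bar>n\<bar> \<and> lhd F \<omega> L a M [0, k, n] J)"
      have X: "\<not> (\<exists>k \<in> Nset \<omega> L \<alpha> - {0}. \<bar>k\<bar> < \<bar>- n\<bar> \<and> lhd F \<omega> L a M [- n, k, 0] J)"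
      proof
        assume "\<exists>k \<in> Nset \<omega> L \<alpha> - {0}. \<bar>k\<bar> < \<bar>- n\<bar> \<and> lhd F \<omega> L a M [- n, k, 0] J"
        then obtain k where k: "k \<in> Nset \<omega> L \<alpha> - {0}" "\<bar>k\<bar> < \<bar>n\<bar>" "lhd F \<omega> L a M [- n, k, 0] J" by auto
        have "lhd F \<omega> L a M [0, -k, n] J" using P3[of "-k" n] k(3) by simp
        moreover have "\<bar>- k\<bar> < \<bar>n\<bar>" using k(2) by simp
        ultimately show False using A negN[OF k(1)] by blast
      qed
      have Y: "lhd F \<omega> L a M [- n, 0, - (- n)] J" using A by simp
      show ?thesis unfolding closest_return_def J_def[symmetric] using mN X Y by blast
    next
      assume B: "lhd F \<omega> L a M [n, 0, -n] J \<and>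
        \<not> (\<exists>k \<in> Nset \<omega> L \<alpha> - {0}. \<bar>k\<bar> < \<bar>n\<bar> \<and> lhd F \<omega> L a M [n, k, 0] J)"
      have X: "\<not> (\<exists>k \<in> Nset \<omega> L \<alpha> - {0}. \<bar>k\<bar> < \<bar>- n\<bar> \<and> lhd F \<omega> L a M [0, k, - n] J)"
      proof
        assume "\<exists>k \<in> Nset \<omega> L \<alpha> - {0}. \<bar>k\<bar> < \<bar>- n\<bar> \<and> lhd F \<omega> L a M [0, k, - n] J"
        then obtain k where k: "k \<in> Nset \<omega> L \<alpha> - {0}" "\<bar>k\<bar> < \<bar>n\<bar>" "lhd F \<omega> L a M [0, k, - n] J" by auto
        have "lhd F \<omega> L a M [n, -k, 0] J" using P3[of k "-n"] k(3) by simp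
        moreover have "\<bar>- k\<bar> < \<bar>n\<bar>" using k(2) by simp
        ultimately show False using B negN[OF k(1)] by blast
      qed
      have Y: "lhd F \<omega> L a M [- (- n), 0, - n] J" using B by simp
      show ?thesis unfolding closest_return_def J_def[symmetric] using mN X Y by blast
    qed
  qed
  show ?thesis using P4 CR unfolding J_def by blast
qed


end
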